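(* Let $H$ be a connected unweighted graph on $p\ge2$ vertices, let $\ell\ge1$, and let $G$ be the weighted graph $$G=\tfrac{1}{p^{\ell-1}}H\otimes\tfrac{1}{p^{\ell-2}}H\otimes\cdots\otimes\tfrac1pH\otimes H$$ on $n=p^\ell$ vertices. Let $k\in\{1,\dots,\ell\}$ and $\rho=c\,p^{2k-\ell-1}$ for a constant $c>0$ (cuts within the $k$ coarsest scales). Then, as $n\to\infty$, $H_0:\beta\in\Theta_0$ and $H_1:\beta\in\Theta_1$ are asymptotically distinguished by the spectral scan statistic $\hat s$ provided $$\frac{\eta}{\sigma}=\omega\big(p^2(\ell+2)\,n^{(2k+1)/\ell}\big).$$
   Context: For a graph and scalar $a>0$, $aH$ is the graph with every edge weight multiplied by $a$. For weighted graphs $H_1,H_2$ on vertex sets $[p]$ with weight matrices $W^{(1)},W^{(2)}$, the product $H_1\otimes H_2$ has vertex set $[p]\times[p]$ and edge $((i_1,i_2),(j_1,j_2))$ of weight $W^{(2)}_{i_2j_2}$ if $i_1=j_1$ and of weight $W^{(1)}_{i_1j_1}$ if $i_2=j_2$ (so its Laplacian is $L_1\otimes I_p+I_p\otimes L_2$); the $\ell$-fold product is formed iteratively. $L$ is the combinatorial Laplacian $D-W$ of $G$. We observe $y=\beta+\varepsilon$, $\varepsilon\sim N(0,\sigma^2I_n)$, $\sigma>0$ known; $P_\beta$ is the law of $y$. $\mathbf 1$ is the all-ones vector, $\mathbf 1_C$ the indicator of $C$, $\bar C=V\setminus C$, $|\partial C|=\sum_{v\in C,w\in\bar C}W_{vw}$.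 $\mathcal{C}(\rho)=\{C\subset V:C\ne\emptyset,C\ne V,|\partial C|/(|C||\bar C|)\le\rho/n\}$. $\bar\beta=\frac1n\mathbf 1^\top\beta$; $\Theta_0=\{\mu\mathbf 1:\mu\in\mathbb{R}\}$, and for $\eta>0$, $\Theta_1=\{\mu\mathbf 1+\delta\mathbf 1_C:\mu\in\mathbb{R},\delta\ne0,C\in\mathcal{C}(\rho),\|\beta-\bar\beta\mathbf 1\|\ge\eta\}$. $\tilde y=y-\bar y\mathbf 1$. Spectral scan statistic: $\hat s=\sup\{(x^\top\tilde y)^2:x\in\mathbb{R}^n,x^\top Lx\le\rho,\|x\|\le1,x^\top\mathbf 1=0\}$. $p,\ell,k,\sigma,\eta$ may depend on $n$; $a_n=\omega(b_n)$ means $b_n/a_n\to0$. Asymptotically distinguished by $\hat s$: there exist thresholds $\tau_n$ such that $T=\mathbf 1\{\hat s>\tau_n\}$ satisfies $\sup_{\beta\in\Theta_0}P_\beta(T=1)\to0$ and $\sup_{\beta\in\Theta_1}P_\beta(T=0)\to0$. *)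

theory Defs
  imports "HOL-Probability.Probability"
begin

definition simple_graph_on :: "nat \<Rightarrow> (nat \<Rightarrow> nat \<Rightarrow> bool) \<Rightarrow> bool" where
  "simple_graph_on p E \<longleftrightarrow> (\<forall>i<p. \<forall>j<p. E i j \<longleftrightarrow> E j i) \<and> (\<forall>i<p. \<not> E i i)"

definition connected_on :: "nat \<Rightarrow> (nat \<Rightarrow> nat \<Rightarrow> bool) \<Rightarrow> bool" where
  "connected_on p E \<longleftrightarrow>
     (\<forall>i<p. \<forall>j<p. (i, j) \<in> {(a, b). a < p \<and> b < p \<and> E a b}\<^sup>*)"

definition unw :: "(nat \<Rightarrow> nat \<Rightarrow> bool) \<Rightarrow> nat \<Rightarrow> nat \<Rightarrow> real" where
  "unw E i j = (if E i j then 1 else 0)"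

definition gscale :: "real \<Rightarrow> (nat \<Rightarrow> nat \<Rightarrow> real) \<Rightarrow> nat \<Rightarrow> nat \<Rightarrow> real" where
  "gscale a W i j = a * W i j"

(* Product H1 (x) H2, where H1 lives on lists (tuples) and H2 on [p];
   the vertex (u, a) is encoded as the list u @ [a]. *)
definition gprod :: "(nat list \<Rightarrow> nat list \<Rightarrow> real) \<Rightarrow> (nat \<Rightarrow> nat \<Rightarrow> real)
                     \<Rightarrow> nat list \<Rightarrow> nat list \<Rightarrow> real" where
  "gprod W1 W2 u v =
     (if butlast u = butlast v then W2 (last u) (last v)
      else if last u = last v then W1 (butlast u) (butlast v) else 0)"

(* iterated product F1 (x) F2 (x) ... (x) Fl, formed iteratively from the left,
   starting from the one-vertex graph on the empty tuple *)
definition iprod :: "(nat \<Rightarrow> nat \<Rightarrow> real) list \<Rightarrow> nat list \<Rightarrow> nat list \<Rightarrow> real" where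
  "iprod Fs = foldl gprod (\<lambda>_ _. 0) Fs"

definition tuples :: "nat \<Rightarrow> nat \<Rightarrow> nat list set" where
  "tuples p l = {xs. length xs = l \<and> (\<forall>x\<in>set xs. x < p)}"

definition multiscale_graph :: "nat \<Rightarrow> nat \<Rightarrow> (nat \<Rightarrow> nat \<Rightarrow> bool) \<Rightarrow> nat list \<Rightarrow> nat list \<Rightarrow> real" where
  "multiscale_graph p l E =
     iprod (map (\<lambda>t. gscale (1 / real p ^ (l - t)) (unw E)) [1..<l+1])"

definition laplacian :: "'v set \<Rightarrow> ('v \<Rightarrow> 'v \<Rightarrow> real) \<Rightarrow> 'v \<Rightarrow> 'v \<Rightarrow> real" where
  "laplacian V W v w = (if v = w then (\<Sum>u\<in>V. W v u) else 0) - W v w"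

definition quad_form :: "'v set \<Rightarrow> ('v \<Rightarrow> 'v \<Rightarrow> real) \<Rightarrow> ('v \<Rightarrow> real) \<Rightarrow> real" where
  "quad_form V M x = (\<Sum>v\<in>V. \<Sum>w\<in>V. x v * M v w * x w)"

definition cut_weight :: "'v set \<Rightarrow> ('v \<Rightarrow> 'v \<Rightarrow> real) \<Rightarrow> 'v set \<Rightarrow> real" where
  "cut_weight V W C = (\<Sum>v\<in>C. \<Sum>w\<in>V - C. W v w)"

definition cut_class :: "'v set \<Rightarrow> ('v \<Rightarrow> 'v \<Rightarrow> real) \<Rightarrow> real \<Rightarrow> 'v set set" where
  "cut_class V W \<rho> = {C. C \<subseteq> V \<and> C \<noteq> {} \<and> C \<noteq> V \<and>
      cut_weight V W C / (real (card C) * real (card (V - C))) \<le> \<rho> / real (card V)}"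

definition mean :: "'v set \<Rightarrow> ('v \<Rightarrow> real) \<Rightarrow> real" where
  "mean V y = (\<Sum>v\<in>V. y v) / real (card V)"

definition vnorm :: "'v set \<Rightarrow> ('v \<Rightarrow> real) \<Rightarrow> real" where
  "vnorm V x = sqrt (\<Sum>v\<in>V. (x v)\<^sup>2)"

definition spectral_scan :: "'v set \<Rightarrow> ('v \<Rightarrow> 'v \<Rightarrow> real) \<Rightarrow> real \<Rightarrow> ('v \<Rightarrow> real) \<Rightarrow> real" where
  "spectral_scan V W \<rho> y =
     Sup {(\<Sum>v\<in>V. x v * (y v - mean V y))\<^sup>2 | x.
            quad_form V (laplacian V W) x \<le> \<rho> \<and> vnorm V x \<le> 1 \<and> (\<Sum>v\<in>V. x v) = 0}"

(* Theta_0 and Theta_1 (as sets of signals, only values on V matter) *)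
definition Theta0 :: "'v set \<Rightarrow> ('v \<Rightarrow> real) set" where
  "Theta0 V = {\<beta>. \<exists>\<mu>::real. \<forall>v\<in>V. \<beta> v = \<mu>}"

definition Theta1 :: "'v set \<Rightarrow> ('v \<Rightarrow> 'v \<Rightarrow> real) \<Rightarrow> real \<Rightarrow> real \<Rightarrow> ('v \<Rightarrow> real) set" where
  "Theta1 V W \<rho> \<eta> = {\<beta>. \<exists>\<mu> \<delta> C. \<delta> \<noteq> 0 \<and> C \<in> cut_class V W \<rho> \<and>
      (\<forall>v\<in>V. \<beta> v = \<mu> + \<delta> * (if v \<in> C then 1 else 0)) \<and>
      vnorm V (\<lambda>v. \<beta> v - mean V \<beta>) \<ge> \<eta>}"

definition noise :: "'v set \<Rightarrow> real \<Rightarrow> ('v \<Rightarrow> real) measure" where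
  "noise V \<sigma> = PiM V (\<lambda>_. density lborel (normal_density 0 \<sigma>))"

definition prob_obs :: "'v set \<Rightarrow> real \<Rightarrow> ('v \<Rightarrow> real) \<Rightarrow> (('v \<Rightarrow> real) \<Rightarrow> bool) \<Rightarrow> real" where
  "prob_obs V \<sigma> \<beta> A = measure (noise V \<sigma>) {\<epsilon> \<in> space (noise V \<sigma>). A (\<lambda>v. \<beta> v + \<epsilon> v)}"

end

theory Submission
  imports Defs
begin


lemma gauss_has_int:
  fixes \<sigma> :: real assumes s: "\<sigma> > 0"
  shows "has_bochner_integral (density lborel (normal_density 0 \<sigma>)) (\<lambda>x. x) 0"
    "has_bochner_integral (density lborel (normal_density 0 \<sigma>)) (\<lambda>x. x^2) (\<sigma>^2)"
    "has_bochner_integral (density lborel (normal_density 0 \<sigma>)) (\<lambda>x. 1::real) 1"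
proof -
  have m: "(\<lambda>x. normal_density 0 \<sigma> x) \<in> borel_measurable lborel" by simp
  have nn: "\<And>x. 0 \<le> normal_density 0 \<sigma> x" by (rule normal_density_nonneg)
  have "has_bochner_integral lborel (\<lambda>x. normal_density 0 \<sigma> x * (x - 0) ^ (2 * 0 + 1)) 0"
    using normal_moment_odd[OF s] by blast
  then have "has_bochner_integral lborel (\<lambda>x. normal_density 0 \<sigma> x *\<^sub>R x) 0" by simp
  then show "has_bochner_integral (density lborel (normal_density 0 \<sigma>)) (\<lambda>x. x) 0"
    by (subst has_bochner_integral_density) (auto simp: nn)
  have "has_bochner_integral lborel (\<lambda>x. normal_density 0 \<sigma> x * (x - 0) ^ (2 * 1))
       (fact (2 * 1) / ((2 / \<sigma>\<^sup>2)^1 * fact 1))"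
    using normal_moment_even[OF s] by blast
  moreover have "(fact (2 * 1) / ((2 / \<sigma>\<^sup>2)^1 * fact 1)) = (\<sigma>^2::real)" using s by simp
  ultimately have "has_bochner_integral lborel (\<lambda>x. normal_density 0 \<sigma> x *\<^sub>R x^2) (\<sigma>^2)" by simp
  then show "has_bochner_integral (density lborel (normal_density 0 \<sigma>)) (\<lambda>x. x^2) (\<sigma>^2)"
    by (subst has_bochner_integral_density) (auto simp: nn)
  have "has_bochner_integral lborel (\<lambda>x. normal_density 0 \<sigma> x * (x - 0) ^ (2 * 0))
       (fact (2 * 0) / ((2 / \<sigma>\<^sup>2)^0 * fact 0))"
    using normal_moment_even[OF s] by blast
  moreover have "(\<lambda>x::real. normal_density 0 \<sigma> x *\<^sub>R (1::real)) = (\<lambda>x. normal_density 0 \<sigma> x * (x - 0) ^ (2 * 0))"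
    by (rule ext) simp
  ultimately have "has_bochner_integral lborel (\<lambda>x. normal_density 0 \<sigma> x *\<^sub>R (1::real)) 1" by simp
  then show "has_bochner_integral (density lborel (normal_density 0 \<sigma>)) (\<lambda>x. 1::real) 1"
    by (subst has_bochner_integral_density) (auto simp: nn)
qed

lemma noise_cross:
  fixes \<sigma> :: real assumes s: "\<sigma> > 0" and fin: "finite V" and vw: "v \<in> V" "w \<in> V"
  shows "integrable (noise V \<sigma>) (\<lambda>e. e v * e w)"
    "(\<integral>e. e v * e w \<partial>noise V \<sigma>) = (if v = w then \<sigma>^2 else 0)"
proof -
  define N where "N = density lborel (normal_density 0 \<sigma>)"
  have pN: "prob_space N" unfolding N_def by (rule prob_space_normal_density[OF s])
  interpret product_prob_space "\<lambda>_. N" V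
    unfolding product_prob_space_def product_prob_space_axioms_def product_sigma_finite_def
    using pN prob_space_imp_sigma_finite by blast
  note G = gauss_has_int[OF s, folded N_def]
  define g where "g i t = (if i = v then t else 1) * (if i = w then t else (1::real))" for i t
  have gc: "g i = (if i = v \<and> i = w then (\<lambda>x. x^2) else if i = v \<or> i = w then (\<lambda>x. x) else (\<lambda>x. 1))" for i
    by (auto simp: g_def fun_eq_iff power2_eq_square)
  have gi: "integrable N (g i)" for i
    proof -
    have I1: "integrable N (\<lambda>x. x)" by (rule integrable.intros[OF G(1)])
    have I2: "integrable N (\<lambda>x. x^2)" by (rule integrable.intros[OF G(2)])
    have I3: "integrable N (\<lambda>x. 1::real)" by (rule integrable.intros[OF G(3)])
    show ?thesis unfolding gc using I1 I2 I3 by simp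
  qed
  have eq: "(\<lambda>e. e v * e w) = (\<lambda>e. \<Prod>i\<in>V. g i (e i))"
    by (rule ext) (simp add: g_def prod.distrib fin vw)
  show "integrable (noise V \<sigma>) (\<lambda>e. e v * e w)"
    unfolding noise_def N_def[symmetric] eq
    by (rule product_integrable_prod[OF fin gi])
  have ig: "integral\<^sup>L N (g i) = (if i = v then (if v = w then \<sigma>^2 else 0) else if i = w then 0 else 1)" for i
    unfolding gc using G by (auto dest: has_bochner_integral_integral_eq)
  have "(\<integral>e. e v * e w \<partial>noise V \<sigma>) = (\<Prod>i\<in>V. integral\<^sup>L N (g i))"
    unfolding noise_def N_def[symmetric] eq
    by (rule product_integral_prod[OF fin gi])
  also have "\<dots> = (if v = w then \<sigma>^2 else 0)"
  proof (cases "v = w")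
    case True
    then show ?thesis unfolding ig using fin vw
      by (simp add: prod.If_cases Int_absorb1 prod.neutral)
  next
    case False
    have "(\<Prod>i\<in>V. integral\<^sup>L N (g i)) = 0"
      by (rule prod_zero) (use fin vw False ig in auto)
    then show ?thesis using False by simp
  qed
  finally show "(\<integral>e. e v * e w \<partial>noise V \<sigma>) = (if v = w then \<sigma>^2 else 0)" .
qed

lemma noise_moment:
  fixes \<sigma> :: real assumes s: "\<sigma> > 0" and fin: "finite V"
  shows "integrable (noise V \<sigma>) (\<lambda>e. (\<Sum>v\<in>V. a v * e v)^2)"
    "(\<integral>e. (\<Sum>v\<in>V. a v * e v)^2 \<partial>noise V \<sigma>) = \<sigma>^2 * (\<Sum>v\<in>V. (a v)^2)"
proof -
  have eq: "(\<lambda>e. (\<Sum>v\<in>V. a v * e v)^2) = (\<lambda>e. \<Sum>v\<in>V. \<Sum>w\<in>V. (a v * a w) * (e v * e w))"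
    by (rule ext) (simp add: power2_eq_square sum_product algebra_simps)
  show "integrable (noise V \<sigma>) (\<lambda>e. (\<Sum>v\<in>V. a v * e v)^2)"
    unfolding eq using noise_cross(1)[OF s fin] by (intro Bochner_Integration.integrable_sum integrable_mult_right) blast
  have "(\<integral>e. (\<Sum>v\<in>V. a v * e v)^2 \<partial>noise V \<sigma>) = (\<Sum>v\<in>V. \<Sum>w\<in>V. (a v * a w) * (if v = w then \<sigma>^2 else 0))"
    unfolding eq
  proof (subst Bochner_Integration.integral_sum)
    show "\<And>v. v \<in> V \<Longrightarrow> integrable (noise V \<sigma>) (\<lambda>e. \<Sum>w\<in>V. a v * a w * (e v * e w))"
      using noise_cross(1)[OF s fin] by (intro Bochner_Integration.integrable_sum integrable_mult_right) blast
    show "(\<Sum>v\<in>V. \<integral>e. (\<Sum>w\<in>V. a v * a w * (e v * e w)) \<partial>noise V \<sigma>) =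
        (\<Sum>v\<in>V. \<Sum>w\<in>V. a v * a w * (if v = w then \<sigma>\<^sup>2 else 0))"
    proof (rule sum.cong[OF refl])
      fix v assume v: "v \<in> V"
      have "(\<integral>e. (\<Sum>w\<in>V. a v * a w * (e v * e w)) \<partial>noise V \<sigma>) = (\<Sum>w\<in>V. \<integral>e. a v * a w * (e v * e w) \<partial>noise V \<sigma>)"
        using noise_cross(1)[OF s fin] v by (intro Bochner_Integration.integral_sum integrable_mult_right) blast
      also have "\<dots> = (\<Sum>w\<in>V. a v * a w * (if v = w then \<sigma>\<^sup>2 else 0))"
        by (rule sum.cong[OF refl]) (simp only: integral_mult_right_zero noise_cross(2)[OF s fin v])
      finally show "(\<integral>e. (\<Sum>w\<in>V. a v * a w * (e v * e w)) \<partial>noise V \<sigma>) = (\<Sum>w\<in>V. a v * a w * (if v = w then \<sigma>\<^sup>2 else 0))" .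
    qed
  qed
  also have "\<dots> = \<sigma>^2 * (\<Sum>v\<in>V. (a v)^2)"
    using fin by (simp add: sum_distrib_left power2_eq_square if_distrib mult.commute cong: if_cong)
  finally show "(\<integral>e. (\<Sum>v\<in>V. a v * e v)^2 \<partial>noise V \<sigma>) = \<sigma>^2 * (\<Sum>v\<in>V. (a v)^2)" .
qed



lemma tuples_0[simp]: "tuples p 0 = {[]}"
  by (auto simp: tuples_def)

lemma tuples_snoc: "tuples p (Suc n) = (\<lambda>(r,i). r @ [i]) ` (tuples p n \<times> {..<p})"
proof (intro set_eqI iffI)
  fix u assume "u \<in> tuples p (Suc n)"
  then have "u \<noteq> []" and "length u = Suc n" "\<forall>x\<in>set u. x < p" by (auto simp: tuples_def)
  then obtain r a where "u = r @ [a]" by (metis rev_exhaust)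
  then show "u \<in> (\<lambda>(r,i). r @ [i]) ` (tuples p n \<times> {..<p})"
    using \<open>length u = Suc n\<close> \<open>\<forall>x\<in>set u. x < p\<close> by (auto simp: tuples_def image_iff)
qed (auto simp: tuples_def)

lemma tuples_cons: "tuples p (Suc n) = (\<lambda>(i,w). i # w) ` ({..<p} \<times> tuples p n)"
proof (intro set_eqI iffI)
  fix u assume "u \<in> tuples p (Suc n)"
  then show "u \<in> (\<lambda>(i,w). i # w) ` ({..<p} \<times> tuples p n)"
    by (cases u) (auto simp: tuples_def image_iff)
qed (auto simp: tuples_def)

lemma tuples_app: "tuples p (a + b) = (\<lambda>(q,w). q @ w) ` (tuples p a \<times> tuples p b)"
proof (intro set_eqI iffI)
  fix u assume u: "u \<in> tuples p (a + b)"
  have "u = take a u @ drop a u" by simp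
  moreover have "take a u \<in> tuples p a" "drop a u \<in> tuples p b"
    using u by (auto simp: tuples_def dest: in_set_takeD in_set_dropD)
  ultimately show "u \<in> (\<lambda>(q,w). q @ w) ` (tuples p a \<times> tuples p b)"
    by (intro rev_image_eqI[of "(take a u, drop a u)"]) auto
qed (auto simp: tuples_def)

lemma finite_tuples[simp]: "finite (tuples p n)"
  by (induction n) (auto simp: tuples_snoc)

lemma sum_tuples_snoc:
  "(\<Sum>v\<in>tuples p (Suc n). f v) = (\<Sum>r\<in>tuples p n. \<Sum>i<p. f (r @ [i]))"
proof -
  have inj: "inj_on (\<lambda>(r,i). r @ [i]) (tuples p n \<times> {..<p})" by (auto simp: inj_on_def)
  show ?thesis unfolding tuples_snoc sum.reindex[OF inj]
    by (simp add: sum.cartesian_product prod.case_distrib)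
qed

lemma sum_tuples_cons:
  "(\<Sum>v\<in>tuples p (Suc n). f v) = (\<Sum>i<p. \<Sum>w\<in>tuples p n. f (i # w))"
proof -
  have inj: "inj_on (\<lambda>(i,w). i # w) ({..<p} \<times> tuples p n)" by (auto simp: inj_on_def)
  show ?thesis unfolding tuples_cons sum.reindex[OF inj]
    by (simp add: sum.cartesian_product prod.case_distrib)
qed

lemma sum_tuples_app:
  "(\<Sum>v\<in>tuples p (a + b). f v) = (\<Sum>q\<in>tuples p a. \<Sum>w\<in>tuples p b. f (q @ w))"
proof -
  have inj: "inj_on (\<lambda>(q,w). q @ w) (tuples p a \<times> tuples p b)" by (auto simp: inj_on_def tuples_def)
  show ?thesis unfolding tuples_app sum.reindex[OF inj]
    by (simp add: sum.cartesian_product prod.case_distrib)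
qed

lemma card_tuples[simp]: "card (tuples p n) = p ^ n"
proof (induction n)
  case (Suc n)
  have "card (tuples p (Suc n)) = (\<Sum>v\<in>tuples p (Suc n). 1)" by simp
  also have "\<dots> = p ^ Suc n" unfolding sum_tuples_snoc using Suc by simp
  finally show ?case .
qed simp

lemma path_bound:
  fixes f :: "nat \<Rightarrow> real"
  assumes conn: "connected_on p E" and i: "i < p" and j: "j < p"
  shows "(f i - f j)^2 \<le> real p ^ 4 * (\<Sum>a<p. \<Sum>b<p. unw E a b * (f a - f b)^2)"
proof -
  define R where "R = {(a, b). a < p \<and> b < p \<and> E a b}"
  define D where "D = (\<Sum>a<p. \<Sum>b<p. unw E a b * (f a - f b)^2)"
  have D0: "0 \<le> D" unfolding D_def unw_def by (intro sum_nonneg) auto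
  have edge: "\<bar>f a - f b\<bar> \<le> sqrt D" if "(a, b) \<in> R" for a b
  proof -
    have ab: "a < p" "b < p" "E a b" using that by (auto simp: R_def)
    have "(f a - f b)^2 = unw E a b * (f a - f b)^2" using ab by (simp add: unw_def)
    also have "\<dots> \<le> (\<Sum>b<p. unw E a b * (f a - f b)^2)"
      by (rule member_le_sum[where f="\<lambda>b. unw E a b * (f a - f b)^2"]) (use ab in \<open>auto simp: unw_def\<close>)
    also have "\<dots> \<le> D" unfolding D_def
      by (rule member_le_sum[where f="\<lambda>a. \<Sum>b<p. unw E a b * (f a - f b)^2"])
         (use ab in \<open>auto simp: unw_def intro!: sum_nonneg\<close>)
    finally show ?thesis by (simp add: real_le_rsqrt)
  qed
  have pow: "\<bar>f a - f b\<bar> \<le> real n * sqrt D" if "(a, b) \<in> R ^^ n" for n a b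
    using that
  proof (induction n arbitrary: b)
    case 0 then show ?case by simp
  next
    case (Suc n)
    then obtain c where ac: "(a, c) \<in> R ^^ n" and cb: "(c, b) \<in> R" by auto
    have "\<bar>f a - f b\<bar> \<le> \<bar>f a - f c\<bar> + \<bar>f c - f b\<bar>" by simp
    also have "\<dots> \<le> real n * sqrt D + sqrt D" using Suc.IH[OF ac] edge[OF cb] by simp
    finally show ?case by (simp add: algebra_simps)
  qed
  have finR: "finite R" unfolding R_def
    by (rule finite_subset[of _ "{..<p} \<times> {..<p}"]) auto
  have cardR: "card R \<le> p * p"
  proof -
    have "card R \<le> card ({..<p} \<times> {..<p})" unfolding R_def by (rule card_mono) auto
    then show ?thesis by (simp add: card_cartesian_product)
  qed
  have "(i, j) \<in> R\<^sup>*" using conn i j unfolding connected_on_def R_def by blast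
  then obtain n where n: "n \<le> card R" "(i, j) \<in> R ^^ n"
    using rtrancl_finite_eq_relpow[OF finR] by blast
  have "\<bar>f i - f j\<bar> \<le> real n * sqrt D" by (rule pow[OF n(2)])
  also have "\<dots> \<le> real p ^ 2 * sqrt D"
  proof (rule mult_right_mono)
    have "real n \<le> real (p * p)" using n(1) cardR by linarith
    then show "real n \<le> real p ^ 2" by (simp add: power2_eq_square)
  qed (simp add: D0)
  finally have h: "\<bar>f i - f j\<bar> \<le> real p ^ 2 * sqrt D" .
  have "(f i - f j)^2 = \<bar>f i - f j\<bar>^2" by simp
  also have "\<dots> \<le> (real p ^ 2 * sqrt D)^2" by (rule power_mono[OF h]) simp
  also have "\<dots> = real p ^ 4 * D" using D0 by (simp add: power_mult_distrib)
  finally show ?thesis unfolding D_def .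
qed



lemma iprod_snoc: "iprod (Fs @ [F]) (u @ [a]) (v @ [b]) = (if u = v then F a b else if a = b then iprod Fs u v else 0)"
  unfolding iprod_def by (simp add: gprod_def)

lemma foldl_gprod_nonneg:
  "(\<And>u v. 0 \<le> W0 u v) \<Longrightarrow> (\<And>F i j. F \<in> set Fs \<Longrightarrow> 0 \<le> F i j) \<Longrightarrow> 0 \<le> foldl gprod W0 Fs u v"
proof (induction Fs arbitrary: W0)
  case (Cons F Fs)
  show ?case unfolding foldl_Cons
    by (rule Cons.IH) (use Cons.prems in \<open>auto simp: gprod_def\<close>)
qed simp

lemma iprod_nonneg: "(\<And>F i j. F \<in> set Fs \<Longrightarrow> 0 \<le> F i j) \<Longrightarrow> 0 \<le> iprod Fs u v"
  unfolding iprod_def by (rule foldl_gprod_nonneg) auto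

lemma tuples_snocE:
  assumes "u \<in> tuples p (Suc n)"
  obtains r a where "u = r @ [a]" "r \<in> tuples p n" "a < p"
  using assms unfolding tuples_snoc by auto

lemma iprod_sym:
  "(\<And>F i j. F \<in> set Fs \<Longrightarrow> i < p \<Longrightarrow> j < p \<Longrightarrow> F i j = F j i) \<Longrightarrow>
   u \<in> tuples p (length Fs) \<Longrightarrow> v \<in> tuples p (length Fs) \<Longrightarrow> iprod Fs u v = iprod Fs v u"
proof (induction Fs arbitrary: u v rule: rev_induct)
  case Nil then show ?case by (simp add: iprod_def)
next
  case (snoc F Fs)
  from snoc.prems(2) obtain r a where u: "u = r @ [a]" "r \<in> tuples p (length Fs)" "a < p"
    by (auto elim: tuples_snocE)
  from snoc.prems(3) obtain r' b where v: "v = r' @ [b]" "r' \<in> tuples p (length Fs)" "b < p"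
    by (auto elim: tuples_snocE)
  have IH: "iprod Fs r r' = iprod Fs r' r" using snoc.IH[OF _ u(2) v(2)] snoc.prems(1) by auto
  have F: "F a b = F b a" using snoc.prems(1) u(3) v(3) by auto
  show ?case unfolding u v iprod_snoc using IH F by auto
qed

lemma iprod_coord:
  "length r = s \<Longrightarrow> length Fs = s + 1 + length w \<Longrightarrow> i \<noteq> j \<Longrightarrow>
   iprod Fs (r @ [i] @ w) (r @ [j] @ w) = (Fs ! s) i j"
proof (induction w arbitrary: Fs rule: rev_induct)
  case Nil
  then obtain Fs' F where Fs: "Fs = Fs' @ [F]" "length Fs' = s" by (metis add.right_neutral length_Suc_conv_rev list.size(3) Suc_eq_plus1)
  show ?case using Nil unfolding Fs by (simp add: iprod_snoc nth_append)
next
  case (snoc a w)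
  then obtain Fs' F where Fs: "Fs = Fs' @ [F]" "length Fs' = s + 1 + length w"
    by (metis add_Suc_right length_Suc_conv_rev length_append_singleton)
  have "iprod Fs (r @ [i] @ w @ [a]) (r @ [j] @ w @ [a]) = iprod Fs' (r @ [i] @ w) (r @ [j] @ w)"
    using snoc.prems unfolding Fs using iprod_snoc[of Fs' F "r @ [i] @ w" a "r @ [j] @ w" a] by simp
  also have "\<dots> = (Fs' ! s) i j" by (rule snoc.IH) (use snoc.prems Fs in auto)
  finally show ?case unfolding Fs using Fs(2) by (simp add: nth_append)
qed

lemma msg_coord:
  assumes "length r = s" "length w = l - 1 - s" "s < l" "i \<noteq> j"
  shows "multiscale_graph p l E (r @ [i] @ w) (r @ [j] @ w) = unw E i j / real p ^ (l - 1 - s)"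
proof -
  have "multiscale_graph p l E (r @ [i] @ w) (r @ [j] @ w) =
     (map (\<lambda>t. gscale (1 / real p ^ (l - t)) (unw E)) [1..<l+1] ! s) i j"
    unfolding multiscale_graph_def by (rule iprod_coord) (use assms in auto)
  also have "\<dots> = unw E i j / real p ^ (l - 1 - s)"
    using assms(3) by (simp del: upt_Suc add: gscale_def nth_map_upt)
  finally show ?thesis .
qed

lemma msg_nonneg: "0 \<le> multiscale_graph p l E u v"
  unfolding multiscale_graph_def by (rule iprod_nonneg) (auto simp: gscale_def unw_def)

lemma msg_sym:
  assumes "simple_graph_on p E" "u \<in> tuples p l" "v \<in> tuples p l"
  shows "multiscale_graph p l E u v = multiscale_graph p l E v u"
  unfolding multiscale_graph_def
  by (rule iprod_sym[where p=p]) (use assms in \<open>auto simp: gscale_def unw_def simple_graph_on_def tuples_def\<close>)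

lemma quad_lap:
  fixes W :: "'v \<Rightarrow> 'v \<Rightarrow> real"
  assumes fin: "finite V" and sym: "\<And>u v. u \<in> V \<Longrightarrow> v \<in> V \<Longrightarrow> W u v = W v u"
  shows "quad_form V (laplacian V W) x = (\<Sum>u\<in>V. \<Sum>v\<in>V. W u v * (x u - x v)^2) / 2"
proof -
  have A: "(\<Sum>u\<in>V. \<Sum>v\<in>V. x u * laplacian V W u v * x v) =
      (\<Sum>u\<in>V. \<Sum>v\<in>V. W u v * (x u)^2) - (\<Sum>u\<in>V. \<Sum>v\<in>V. W u v * x u * x v)"
  proof -
    have "(\<Sum>u\<in>V. \<Sum>v\<in>V. x u * laplacian V W u v * x v) =
       (\<Sum>u\<in>V. (\<Sum>v\<in>V. W u v * (x u)^2) - (\<Sum>v\<in>V. W u v * x u * x v))"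
    proof (rule sum.cong[OF refl])
      fix u assume u: "u \<in> V"
      have "(\<Sum>v\<in>V. x u * laplacian V W u v * x v) =
            (\<Sum>v\<in>V. x u * (if u = v then (\<Sum>w\<in>V. W u w) else 0) * x v) - (\<Sum>v\<in>V. W u v * x u * x v)"
        unfolding laplacian_def by (simp add: algebra_simps sum_subtractf)
      also have "(\<Sum>v\<in>V. x u * (if u = v then (\<Sum>w\<in>V. W u w) else 0) * x v) = x u * (\<Sum>w\<in>V. W u w) * x u"
      proof -
        have "(\<Sum>v\<in>V. x u * (if u = v then (\<Sum>w\<in>V. W u w) else 0) * x v) =
              (\<Sum>v\<in>V. if u = v then x u * (\<Sum>w\<in>V. W u w) * x u else 0)"
          by (rule sum.cong) auto
        also have "\<dots> = x u * (\<Sum>w\<in>V. W u w) * x u" using fin u by simp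
        finally show ?thesis .
      qed
      also have "\<dots> = (\<Sum>v\<in>V. W u v * (x u)^2)"
        by (simp add: sum_distrib_left sum_distrib_right power2_eq_square algebra_simps)
      finally show "(\<Sum>v\<in>V. x u * laplacian V W u v * x v) =
            (\<Sum>v\<in>V. W u v * (x u)^2) - (\<Sum>v\<in>V. W u v * x u * x v)" .
    qed
    also have "\<dots> = (\<Sum>u\<in>V. \<Sum>v\<in>V. W u v * (x u)^2) - (\<Sum>u\<in>V. \<Sum>v\<in>V. W u v * x u * x v)"
      by (simp add: sum_subtractf)
    finally show ?thesis .
  qed
  have swap: "(\<Sum>u\<in>V. \<Sum>v\<in>V. W u v * (x v)^2) = (\<Sum>u\<in>V. \<Sum>v\<in>V. W u v * (x u)^2)"
    by (subst sum.swap) (auto intro!: sum.cong simp: sym)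
  have "(\<Sum>u\<in>V. \<Sum>v\<in>V. W u v * (x u - x v)^2) =
      (\<Sum>u\<in>V. \<Sum>v\<in>V. W u v * (x u)^2) + (\<Sum>u\<in>V. \<Sum>v\<in>V. W u v * (x v)^2) - 2 * (\<Sum>u\<in>V. \<Sum>v\<in>V. W u v * x u * x v)"
    by (simp add: power2_diff algebra_simps sum.distrib sum_subtractf sum_distrib_left)
  then show ?thesis unfolding quad_form_def A swap by simp
qed



definition blk :: "nat \<Rightarrow> nat \<Rightarrow> (nat list \<Rightarrow> real) \<Rightarrow> nat \<Rightarrow> nat list \<Rightarrow> real" where
  "blk p l g t q = (\<Sum>w\<in>tuples p (l - t). g (q @ w))"

definition Sfun :: "nat \<Rightarrow> nat \<Rightarrow> (nat list \<Rightarrow> real) \<Rightarrow> (nat list \<Rightarrow> real) \<Rightarrow> nat \<Rightarrow> real" where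
  "Sfun p l x e t = (\<Sum>q\<in>tuples p t. blk p l x t q * blk p l e t q / real p ^ (l - t))"

lemma blk_split:
  assumes "t < l"
  shows "blk p l g t r = (\<Sum>i<p. blk p l g (Suc t) (r @ [i]))"
proof -
  have "l - t = Suc (l - Suc t)" using assms by simp
  then show ?thesis unfolding blk_def by (simp add: sum_tuples_cons)
qed

lemma Sfun_diff:
  assumes "t < l" and p: "p > 0"
  shows "Sfun p l x e (Suc t) - Sfun p l x e t =
    (\<Sum>q\<in>tuples p (Suc t). (blk p l e (Suc t) q / real p ^ (l - Suc t)) *
        (blk p l x (Suc t) q - blk p l x t (butlast q) / real p))"
proof -
  define m where "m = l - Suc t"
  have lt: "l - t = Suc m" using assms unfolding m_def by simp
  define P where "P = real p ^ m"
  have P0: "P > 0" using p unfolding P_def by simp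
  have "Sfun p l x e (Suc t) = (\<Sum>r\<in>tuples p t. \<Sum>i<p. blk p l x (Suc t) (r@[i]) * blk p l e (Suc t) (r@[i]) / P)"
    unfolding Sfun_def sum_tuples_snoc m_def P_def ..
  moreover have "Sfun p l x e t = (\<Sum>r\<in>tuples p t. \<Sum>i<p. blk p l x t r * blk p l e (Suc t) (r@[i]) / (real p * P))"
    unfolding Sfun_def lt P_def using blk_split[OF assms(1), of p e]
    by (simp add: sum_distrib_left sum_divide_distrib)
  moreover have "(\<Sum>q\<in>tuples p (Suc t). (blk p l e (Suc t) q / real p ^ (l - Suc t)) *
        (blk p l x (Suc t) q - blk p l x t (butlast q) / real p)) =
      (\<Sum>r\<in>tuples p t. \<Sum>i<p. (blk p l e (Suc t) (r@[i]) / P) *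
        (blk p l x (Suc t) (r@[i]) - blk p l x t r / real p))"
    unfolding sum_tuples_snoc m_def P_def by simp
  ultimately show ?thesis
    using p P0 by (simp add: sum_subtractf[symmetric] field_simps)
qed

lemma dev_bound:
  fixes X :: "nat \<Rightarrow> real" assumes p: "p > 0"
  shows "(X i - (\<Sum>j<p. X j) / real p)^2 \<le> (\<Sum>j<p. (X i - X j)^2) / real p"
proof -
  have "X i - (\<Sum>j<p. X j) / real p = (\<Sum>j<p. (X i - X j)) / real p"
    using p by (simp add: sum_subtractf field_simps)
  then have "(X i - (\<Sum>j<p. X j) / real p)^2 = (\<Sum>j<p. (X i - X j))^2 / (real p)^2"
    by (simp add: power_divide)
  also have "\<dots> \<le> ((\<Sum>j<p. (X i - X j)^2) * real p) / (real p)^2"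
    by (rule divide_right_mono) (use sum_squared_le_sum_of_squares[of "\<lambda>j. X i - X j" "{..<p}"] in auto)
  also have "\<dots> = (\<Sum>j<p. (X i - X j)^2) / real p"
    using p by (simp add: power2_eq_square)
  finally show ?thesis .
qed

lemma b_bound:
  assumes tl: "t < l" and p: "p > 0" and conn: "connected_on p E"
  shows "(\<Sum>q\<in>tuples p (Suc t). (blk p l x (Suc t) q - blk p l x t (butlast q) / real p)^2) \<le>
     real p ^ (l - Suc t + 5) * (\<Sum>r\<in>tuples p t. \<Sum>w\<in>tuples p (l - Suc t).
        \<Sum>a<p. \<Sum>b<p. unw E a b * (x (r @ [a] @ w) - x (r @ [b] @ w))^2)"
proof -
  define m where "m = l - Suc t"
  define X where "X r i = blk p l x (Suc t) (r @ [i])" for r i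
  define D where "D r w = (\<Sum>a<p. \<Sum>b<p. unw E a b * (x (r @ [a] @ w) - x (r @ [b] @ w))^2)" for r w
  have Xdef: "X r i = (\<Sum>w\<in>tuples p m. x (r @ [i] @ w))" for r i
    unfolding X_def blk_def m_def by simp
  have "(\<Sum>q\<in>tuples p (Suc t). (blk p l x (Suc t) q - blk p l x t (butlast q) / real p)^2) =
        (\<Sum>r\<in>tuples p t. \<Sum>i<p. (X r i - (\<Sum>j<p. X r j) / real p)^2)"
    unfolding sum_tuples_snoc X_def using blk_split[OF tl] by simp
  also have "\<dots> \<le> (\<Sum>r\<in>tuples p t. \<Sum>i<p. (\<Sum>j<p. (X r i - X r j)^2) / real p)"
    by (intro sum_mono dev_bound p)
  also have "\<dots> \<le> (\<Sum>r\<in>tuples p t. \<Sum>i<p. (\<Sum>j<p. real p ^ m * (\<Sum>w\<in>tuples p m. (x (r @ [i] @ w) - x (r @ [j] @ w))^2)) / real p)"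
  proof (intro sum_mono divide_right_mono)
    fix r i j
    have "(X r i - X r j)^2 = (\<Sum>w\<in>tuples p m. (x (r @ [i] @ w) - x (r @ [j] @ w)))^2"
      unfolding Xdef by (simp add: sum_subtractf)
    also have "\<dots> \<le> (\<Sum>w\<in>tuples p m. (x (r @ [i] @ w) - x (r @ [j] @ w))^2) * real (card (tuples p m))"
      by (rule sum_squared_le_sum_of_squares)
    finally show "(X r i - X r j)^2 \<le> real p ^ m * (\<Sum>w\<in>tuples p m. (x (r @ [i] @ w) - x (r @ [j] @ w))^2)"
      by (simp add: mult.commute)
  qed simp
  also have "\<dots> = (real p ^ m / real p) * (\<Sum>r\<in>tuples p t. \<Sum>w\<in>tuples p m. \<Sum>i<p. \<Sum>j<p. (x (r @ [i] @ w) - x (r @ [j] @ w))^2)"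
  proof -
    have "(\<Sum>r\<in>tuples p t. \<Sum>i<p. (\<Sum>j<p. real p ^ m * (\<Sum>w\<in>tuples p m. (x (r @ [i] @ w) - x (r @ [j] @ w))^2)) / real p) =
      (real p ^ m / real p) * (\<Sum>r\<in>tuples p t. \<Sum>i<p. \<Sum>j<p. \<Sum>w\<in>tuples p m. (x (r @ [i] @ w) - x (r @ [j] @ w))^2)"
      by (simp add: sum_distrib_left sum_divide_distrib)
    also have "(\<Sum>r\<in>tuples p t. \<Sum>i<p. \<Sum>j<p. \<Sum>w\<in>tuples p m. (x (r @ [i] @ w) - x (r @ [j] @ w))^2) =
        (\<Sum>r\<in>tuples p t. \<Sum>w\<in>tuples p m. \<Sum>i<p. \<Sum>j<p. (x (r @ [i] @ w) - x (r @ [j] @ w))^2)"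
    proof (rule sum.cong[OF refl])
      fix r
      have "(\<Sum>i<p. \<Sum>j<p. \<Sum>w\<in>tuples p m. (x (r @ [i] @ w) - x (r @ [j] @ w))^2) =
            (\<Sum>i<p. \<Sum>w\<in>tuples p m. \<Sum>j<p. (x (r @ [i] @ w) - x (r @ [j] @ w))^2)"
        by (rule sum.cong[OF refl]) (rule sum.swap)
      also have "\<dots> = (\<Sum>w\<in>tuples p m. \<Sum>i<p. \<Sum>j<p. (x (r @ [i] @ w) - x (r @ [j] @ w))^2)"
        by (rule sum.swap)
      finally show "(\<Sum>i<p. \<Sum>j<p. \<Sum>w\<in>tuples p m. (x (r @ [i] @ w) - x (r @ [j] @ w))^2) =
            (\<Sum>w\<in>tuples p m. \<Sum>i<p. \<Sum>j<p. (x (r @ [i] @ w) - x (r @ [j] @ w))^2)" .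
    qed
    finally show ?thesis .
  qed
  also have "\<dots> \<le> (real p ^ m / real p) * (\<Sum>r\<in>tuples p t. \<Sum>w\<in>tuples p m. \<Sum>i<p. \<Sum>j<p. real p ^ 4 * D r w)"
  proof (intro mult_left_mono sum_mono)
    fix r w i j assume "i \<in> {..<p}" "j \<in> {..<p}"
    then show "(x (r @ [i] @ w) - x (r @ [j] @ w))^2 \<le> real p ^ 4 * D r w"
      unfolding D_def using path_bound[OF conn, of i j "\<lambda>a. x (r @ [a] @ w)"] by simp
  qed simp
  also have "\<dots> = real p ^ (m + 5) * (\<Sum>r\<in>tuples p t. \<Sum>w\<in>tuples p m. D r w)"
    using p by (simp add: sum_distrib_left sum_distrib_right power_add field_simps eval_nat_numeral)
  finally show ?thesis unfolding m_def D_def .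
qed

lemma sum_V_split:
  "(\<Sum>u\<in>tuples p (t + Suc m). F u) = (\<Sum>r\<in>tuples p t. \<Sum>a<p. \<Sum>w\<in>tuples p m. F (r @ [a] @ w))"
  unfolding sum_tuples_app sum_tuples_cons by simp

lemma inner_le:
  fixes g :: "nat list \<Rightarrow> real"
  assumes r: "r \<in> tuples p t" and w: "w \<in> tuples p m" and l: "l = t + Suc m"
    and nn: "\<And>v. v \<in> tuples p l \<Longrightarrow> 0 \<le> g v"
  shows "(\<Sum>b<p. g (r @ [b] @ w)) \<le> (\<Sum>v\<in>tuples p l. g v)"
proof -
  have inj: "inj_on (\<lambda>b. r @ [b] @ w) {..<p}" by (auto simp: inj_on_def)
  have sub: "(\<lambda>b. r @ [b] @ w) ` {..<p} \<subseteq> tuples p l"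
    using r w l by (auto simp: tuples_def)
  have "(\<Sum>b<p. g (r @ [b] @ w)) = (\<Sum>v\<in>(\<lambda>b. r @ [b] @ w) ` {..<p}. g v)"
    by (simp only: sum.reindex[OF inj] o_def)
  also have "\<dots> \<le> (\<Sum>v\<in>tuples p l. g v)"
    by (rule sum_mono2[OF finite_tuples sub]) (use nn in auto)
  finally show ?thesis .
qed

lemma D_bound:
  assumes tl: "t < l" and p: "p > 0"
  shows "(\<Sum>r\<in>tuples p t. \<Sum>w\<in>tuples p (l - Suc t).
        \<Sum>a<p. \<Sum>b<p. unw E a b * (x (r @ [a] @ w) - x (r @ [b] @ w))^2) \<le>
     real p ^ (l - Suc t) * (\<Sum>u\<in>tuples p l. \<Sum>v\<in>tuples p l.
        multiscale_graph p l E u v * (x u - x v)^2)"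
proof -
  define m where "m = l - Suc t"
  have l: "l = t + Suc m" using tl unfolding m_def by simp
  define G where "G u v = multiscale_graph p l E u v * (x u - x v)^2" for u v
  have G0: "0 \<le> G u v" for u v unfolding G_def using msg_nonneg by simp
  have trm: "unw E a b * (x (r @ [a] @ w) - x (r @ [b] @ w))^2 = real p ^ m * G (r @ [a] @ w) (r @ [b] @ w)"
    if r: "r \<in> tuples p t" and w: "w \<in> tuples p m" for r w a b
  proof (cases "a = b")
    case True then show ?thesis by (simp add: G_def)
  next
    case False
    have "multiscale_graph p l E (r @ [a] @ w) (r @ [b] @ w) = unw E a b / real p ^ (l - 1 - t)"
      by (rule msg_coord) (use r w l False in \<open>auto simp: tuples_def\<close>)
    then show ?thesis using p l by (simp add: G_def)
  qed
  have "(\<Sum>r\<in>tuples p t. \<Sum>w\<in>tuples p m.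
        \<Sum>a<p. \<Sum>b<p. unw E a b * (x (r @ [a] @ w) - x (r @ [b] @ w))^2) =
      real p ^ m * (\<Sum>r\<in>tuples p t. \<Sum>w\<in>tuples p m. \<Sum>a<p. \<Sum>b<p. G (r @ [a] @ w) (r @ [b] @ w))"
  proof -
    have "(\<Sum>r\<in>tuples p t. \<Sum>w\<in>tuples p m.
        \<Sum>a<p. \<Sum>b<p. unw E a b * (x (r @ [a] @ w) - x (r @ [b] @ w))^2) =
      (\<Sum>r\<in>tuples p t. \<Sum>w\<in>tuples p m. \<Sum>a<p. \<Sum>b<p. real p ^ m * G (r @ [a] @ w) (r @ [b] @ w))"
      by (intro sum.cong refl) (simp only: trm)
    then show ?thesis by (simp add: sum_distrib_left)
  qed
  also have "(\<Sum>r\<in>tuples p t. \<Sum>w\<in>tuples p m. \<Sum>a<p. \<Sum>b<p. G (r @ [a] @ w) (r @ [b] @ w)) =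
      (\<Sum>r\<in>tuples p t. \<Sum>a<p. \<Sum>w\<in>tuples p m. \<Sum>b<p. G (r @ [a] @ w) (r @ [b] @ w))"
    by (rule sum.cong[OF refl]) (rule sum.swap)
  also have "\<dots> \<le> (\<Sum>r\<in>tuples p t. \<Sum>a<p. \<Sum>w\<in>tuples p m. \<Sum>v\<in>tuples p l. G (r @ [a] @ w) v)"
    by (intro sum_mono inner_le[OF _ _ l] G0) auto
  also have "\<dots> = (\<Sum>u\<in>tuples p l. \<Sum>v\<in>tuples p l. G u v)"
    unfolding l sum_V_split ..
  finally show ?thesis unfolding m_def[symmetric] G_def using p
    by (simp add: mult_left_mono)
qed

lemma step_bound:
  assumes tl: "t < l" and p: "p > 0" and conn: "connected_on p E"
  shows "(Sfun p l x e (Suc t) - Sfun p l x e t)^2 \<le>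
    real p ^ 5 * (\<Sum>u\<in>tuples p l. \<Sum>v\<in>tuples p l. multiscale_graph p l E u v * (x u - x v)^2) *
    (\<Sum>q\<in>tuples p (Suc t). (blk p l e (Suc t) q)^2)"
proof -
  define m where "m = l - Suc t"
  define Qt where "Qt = (\<Sum>u\<in>tuples p l. \<Sum>v\<in>tuples p l. multiscale_graph p l E u v * (x u - x v)^2)"
  define A where "A = (\<Sum>q\<in>tuples p (Suc t). (blk p l e (Suc t) q)^2)"
  define B where "B = (\<Sum>q\<in>tuples p (Suc t). (blk p l x (Suc t) q - blk p l x t (butlast q) / real p)^2)"
  have P: "real p ^ m > 0" using p by simp
  have B0: "0 \<le> B" unfolding B_def by (rule sum_nonneg) simp
  have Bb: "B \<le> real p ^ (m + 5) * (real p ^ m * Qt)"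
    unfolding B_def m_def Qt_def
    by (rule order_trans[OF b_bound[OF tl p conn]]) (intro mult_left_mono D_bound[OF tl p]; simp)
  have "(Sfun p l x e (Suc t) - Sfun p l x e t)^2 \<le>
      (\<Sum>q\<in>tuples p (Suc t). (blk p l e (Suc t) q / real p ^ m)^2) * B"
    unfolding Sfun_diff[OF tl p] B_def m_def by (rule Cauchy_Schwarz_ineq_sum)
  also have "(\<Sum>q\<in>tuples p (Suc t). (blk p l e (Suc t) q / real p ^ m)^2) = A / (real p ^ m)^2"
    unfolding A_def by (simp add: power_divide sum_divide_distrib)
  also have "A / (real p ^ m)^2 * B \<le> A / (real p ^ m)^2 * (real p ^ (m + 5) * (real p ^ m * Qt))"
    by (rule mult_left_mono[OF Bb]) (simp add: A_def sum_nonneg)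
  also have "\<dots> = real p ^ 5 * Qt * A"
    using P by (simp add: power_add field_simps power2_eq_square)
  finally show ?thesis unfolding Qt_def A_def .
qed

lemma telescope_bound:
  assumes p: "p > 0" and conn: "connected_on p E" and x0: "(\<Sum>v\<in>tuples p l. x v) = 0"
  shows "(\<Sum>v\<in>tuples p l. x v * e v)^2 \<le>
    real l * real p ^ 5 * (\<Sum>u\<in>tuples p l. \<Sum>v\<in>tuples p l. multiscale_graph p l E u v * (x u - x v)^2) *
    (\<Sum>t<l. \<Sum>q\<in>tuples p (Suc t). (blk p l e (Suc t) q)^2)"
proof -
  define Qt where "Qt = (\<Sum>u\<in>tuples p l. \<Sum>v\<in>tuples p l. multiscale_graph p l E u v * (x u - x v)^2)"
  define d where "d t = Sfun p l x e (Suc t) - Sfun p l x e t" for t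
  have Sl: "Sfun p l x e l = (\<Sum>v\<in>tuples p l. x v * e v)"
    unfolding Sfun_def blk_def by simp
  have S0: "Sfun p l x e 0 = 0"
    unfolding Sfun_def blk_def using x0 by simp
  have "(\<Sum>v\<in>tuples p l. x v * e v) = (\<Sum>t<l. d t)"
    unfolding d_def sum_lessThan_telescope Sl S0 by simp
  then have "(\<Sum>v\<in>tuples p l. x v * e v)^2 \<le> (\<Sum>t<l. (d t)^2) * real l"
    using sum_squared_le_sum_of_squares[of d "{..<l}"] by simp
  also have "\<dots> \<le> (\<Sum>t<l. real p ^ 5 * Qt * (\<Sum>q\<in>tuples p (Suc t). (blk p l e (Suc t) q)^2)) * real l"
    by (intro mult_right_mono sum_mono) (auto simp: d_def Qt_def intro: step_bound[OF _ p conn])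
  also have "\<dots> = real l * real p ^ 5 * Qt * (\<Sum>t<l. \<Sum>q\<in>tuples p (Suc t). (blk p l e (Suc t) q)^2)"
    by (simp only: sum_distrib_left[symmetric]) (simp only: mult_ac)
  finally show ?thesis unfolding Qt_def .
qed



lemma scan_H0:
  assumes p: "p > 0" and conn: "connected_on p E" and g: "simple_graph_on p E" and rho: "0 \<le> \<rho>"
    and beta: "\<forall>v\<in>tuples p l. \<beta> v = \<mu>"
  shows "spectral_scan (tuples p l) (multiscale_graph p l E) \<rho> (\<lambda>v. \<beta> v + e v) \<le>
    real l * real p ^ 5 * (2 * \<rho>) * (\<Sum>t<l. \<Sum>q\<in>tuples p (Suc t). (blk p l e (Suc t) q)^2)"
proof -
  define V where "V = tuples p l"
  define W where "W = multiscale_graph p l E"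
  define y where "y = (\<lambda>v. \<beta> v + e v)"
  define A where "A = (\<Sum>t<l. \<Sum>q\<in>tuples p (Suc t). (blk p l e (Suc t) q)^2)"
  have A0: "0 \<le> A" unfolding A_def by (intro sum_nonneg) simp
  define S where "S = {(\<Sum>v\<in>V. x v * (y v - mean V y))\<^sup>2 | x.
            quad_form V (laplacian V W) x \<le> \<rho> \<and> vnorm V x \<le> 1 \<and> (\<Sum>v\<in>V. x v) = 0}"
  have "S \<noteq> {}"
  proof -
    have "(\<Sum>v\<in>V. (\<lambda>_. 0::real) v * (y v - mean V y))\<^sup>2 \<in> S"
      unfolding S_def using rho by (auto simp: quad_form_def vnorm_def intro!: exI[of _ "\<lambda>_. 0"])
    then show ?thesis by blast
  qed
  moreover have "s \<le> real l * real p ^ 5 * (2 * \<rho>) * A" if "s \<in> S" for s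
  proof -
    obtain x where s: "s = (\<Sum>v\<in>V. x v * (y v - mean V y))\<^sup>2" and q: "quad_form V (laplacian V W) x \<le> \<rho>"
      and x0: "(\<Sum>v\<in>V. x v) = 0"
      using \<open>s \<in> S\<close> unfolding S_def by blast
    have "(\<Sum>v\<in>V. x v * (y v - mean V y)) = (\<Sum>v\<in>V. x v * e v) + (\<mu> - mean V y) * (\<Sum>v\<in>V. x v)"
    proof -
      have "(\<Sum>v\<in>V. x v * (y v - mean V y)) = (\<Sum>v\<in>V. x v * e v + (\<mu> - mean V y) * x v)"
        by (rule sum.cong[OF refl]) (use beta in \<open>simp add: y_def V_def algebra_simps\<close>)
      then show ?thesis by (simp add: sum.distrib sum_distrib_left)
    qed
    then have s': "s = (\<Sum>v\<in>V. x v * e v)^2" using s x0 by simp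
    have sym: "\<And>u v. u \<in> V \<Longrightarrow> v \<in> V \<Longrightarrow> W u v = W v u"
      unfolding V_def W_def using msg_sym[OF g] by blast
    have Qt: "(\<Sum>u\<in>V. \<Sum>v\<in>V. W u v * (x u - x v)^2) = 2 * quad_form V (laplacian V W) x"
      using quad_lap[of V W, OF _ sym, of x] unfolding V_def by simp
    have Qt0: "0 \<le> (\<Sum>u\<in>V. \<Sum>v\<in>V. W u v * (x u - x v)^2)"
      unfolding W_def by (intro sum_nonneg mult_nonneg_nonneg msg_nonneg) simp
    have "s \<le> real l * real p ^ 5 * (\<Sum>u\<in>V. \<Sum>v\<in>V. W u v * (x u - x v)^2) * A"
      unfolding s' A_def V_def W_def by (rule telescope_bound[OF p conn]) (use x0 V_def in simp)
    also have "\<dots> \<le> real l * real p ^ 5 * (2 * \<rho>) * A"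
      by (intro mult_right_mono mult_left_mono A0) (use Qt q in auto)
    finally show ?thesis .
  qed
  ultimately have "Sup S \<le> real l * real p ^ 5 * (2 * \<rho>) * A" by (rule cSup_least)
  then show ?thesis unfolding spectral_scan_def S_def V_def W_def y_def A_def .
qed



lemma blk_lin:
  assumes q: "q \<in> tuples p t" and tl: "t \<le> l"
  shows "blk p l e t q = (\<Sum>v\<in>tuples p l. (if v \<in> (\<lambda>w. q @ w) ` tuples p (l - t) then 1 else 0) * e v)"
    and "(\<Sum>v\<in>tuples p l. (if v \<in> (\<lambda>w. q @ w) ` tuples p (l - t) then 1 else (0::real))^2) = real p ^ (l - t)"
proof -
  define I where "I = (\<lambda>w. q @ w) ` tuples p (l - t)"
  have inj: "inj_on (\<lambda>w. q @ w) (tuples p (l - t))" by (auto simp: inj_on_def)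
  have sub: "I \<subseteq> tuples p l" unfolding I_def using q tl by (auto simp: tuples_def)
  have "(\<Sum>v\<in>tuples p l. (if v \<in> I then 1 else 0) * e v) = (\<Sum>v\<in>I. e v)"
  proof -
    have "(\<Sum>v\<in>tuples p l. (if v \<in> I then 1 else 0) * e v) = (\<Sum>v\<in>tuples p l. if v \<in> I then e v else 0)"
      by (rule sum.cong) auto
    also have "\<dots> = (\<Sum>v\<in>tuples p l \<inter> I. e v)" by (simp add: sum.inter_restrict)
    finally show ?thesis using sub by (simp add: Int_absorb1)
  qed
  also have "\<dots> = blk p l e t q" unfolding I_def blk_def by (simp add: sum.reindex[OF inj])
  finally show "blk p l e t q = (\<Sum>v\<in>tuples p l. (if v \<in> (\<lambda>w. q @ w) ` tuples p (l - t) then 1 else 0) * e v)"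
    unfolding I_def by simp
  have "(\<Sum>v\<in>tuples p l. (if v \<in> I then 1 else (0::real))^2) = real (card I)"
  proof -
    have "(\<Sum>v\<in>tuples p l. (if v \<in> I then 1 else (0::real))^2) = (\<Sum>v\<in>tuples p l. if v \<in> I then 1 else 0)"
      by (rule sum.cong) auto
    also have "\<dots> = (\<Sum>v\<in>tuples p l \<inter> I. 1)" using sum.inter_restrict[of "tuples p l" "\<lambda>_. 1::real" I] by simp
    finally show ?thesis using sub by (simp add: Int_absorb1)
  qed
  also have "card I = p ^ (l - t)" unfolding I_def by (simp add: card_image[OF inj])
  finally show "(\<Sum>v\<in>tuples p l. (if v \<in> (\<lambda>w. q @ w) ` tuples p (l - t) then 1 else (0::real))^2) = real p ^ (l - t)"
    unfolding I_def by simp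
qed

lemma A_moment:
  assumes s: "\<sigma> > 0"
  shows "integrable (noise (tuples p l) \<sigma>) (\<lambda>e. \<Sum>t<l. \<Sum>q\<in>tuples p (Suc t). (blk p l e (Suc t) q)^2)"
    "(\<integral>e. (\<Sum>t<l. \<Sum>q\<in>tuples p (Suc t). (blk p l e (Suc t) q)^2) \<partial>noise (tuples p l) \<sigma>) = real l * \<sigma>^2 * real p ^ l"
proof -
  define a where "a t q v = (if v \<in> (\<lambda>w. q @ w) ` tuples p (l - Suc t) then 1 else (0::real))" for t q v
  have bl: "blk p l e (Suc t) q = (\<Sum>v\<in>tuples p l. a t q v * e v)" if "t < l" "q \<in> tuples p (Suc t)" for t q e
    unfolding a_def using blk_lin(1)[OF that(2)] that by simp
  have eq: "(\<lambda>e. \<Sum>t<l. \<Sum>q\<in>tuples p (Suc t). (blk p l e (Suc t) q)^2) =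
      (\<lambda>e. \<Sum>t<l. \<Sum>q\<in>tuples p (Suc t). (\<Sum>v\<in>tuples p l. a t q v * e v)^2)"
    by (intro ext sum.cong refl) (simp add: bl)
  show "integrable (noise (tuples p l) \<sigma>) (\<lambda>e. \<Sum>t<l. \<Sum>q\<in>tuples p (Suc t). (blk p l e (Suc t) q)^2)"
    unfolding eq
    by (intro Bochner_Integration.integrable_sum noise_moment(1)[OF s finite_tuples])
  have "(\<integral>e. (\<Sum>t<l. \<Sum>q\<in>tuples p (Suc t). (blk p l e (Suc t) q)^2) \<partial>noise (tuples p l) \<sigma>) =
      (\<Sum>t<l. \<Sum>q\<in>tuples p (Suc t). \<sigma>^2 * (\<Sum>v\<in>tuples p l. (a t q v)^2))"
    unfolding eq
    by (subst Bochner_Integration.integral_sum, intro Bochner_Integration.integrable_sum noise_moment(1)[OF s finite_tuples],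
        intro sum.cong refl, subst Bochner_Integration.integral_sum, rule noise_moment(1)[OF s finite_tuples],
        intro sum.cong refl, rule noise_moment(2)[OF s finite_tuples])
  also have "\<dots> = (\<Sum>t<l. \<Sum>q\<in>tuples p (Suc t). \<sigma>^2 * real p ^ (l - Suc t))"
    by (intro sum.cong refl) (simp add: a_def blk_lin(2))
  also have "\<dots> = (\<Sum>t<l. \<sigma>^2 * real p ^ l)"
  proof (intro sum.cong refl)
    fix t assume "t \<in> {..<l}"
    then have "Suc t + (l - Suc t) = l" by simp
    then have "real p ^ Suc t * real p ^ (l - Suc t) = real p ^ l" by (metis power_add of_nat_power)
    then show "(\<Sum>q\<in>tuples p (Suc t). \<sigma>^2 * real p ^ (l - Suc t)) = \<sigma>^2 * real p ^ l"
      by (simp add: algebra_simps)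
  qed
  also have "\<dots> = real l * \<sigma>^2 * real p ^ l" by simp
  finally show "(\<integral>e. (\<Sum>t<l. \<Sum>q\<in>tuples p (Suc t). (blk p l e (Suc t) q)^2) \<partial>noise (tuples p l) \<sigma>) = real l * \<sigma>^2 * real p ^ l" .
qed



lemma split_sum:
  assumes "finite V" "C \<subseteq> V"
  shows "(\<Sum>v\<in>V. f v) = (\<Sum>v\<in>C. f v) + (\<Sum>v\<in>V - C. f v)"
  using assms by (metis add.commute sum.subset_diff)

lemma cut_quad:
  fixes W :: "'v \<Rightarrow> 'v \<Rightarrow> real"
  assumes fin: "finite V" and C: "C \<subseteq> V" and sym: "\<And>u v. u \<in> V \<Longrightarrow> v \<in> V \<Longrightarrow> W u v = W v u"
    and f: "\<And>v. v \<in> V \<Longrightarrow> f v = \<mu> + \<delta> * (if v \<in> C then 1 else 0)"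
  shows "(\<Sum>u\<in>V. \<Sum>v\<in>V. W u v * (f u - f v)^2) = 2 * \<delta>^2 * cut_weight V W C"
proof -
  have finC: "finite C" using fin C by (rule rev_finite_subset)
  have CC: "(\<Sum>u\<in>C. \<Sum>v\<in>V. W u v * (f u - f v)^2) = \<delta>^2 * cut_weight V W C"
  proof -
    have "(\<Sum>u\<in>C. \<Sum>v\<in>V. W u v * (f u - f v)^2) = (\<Sum>u\<in>C. \<Sum>v\<in>V - C. \<delta>^2 * W u v)"
    proof (rule sum.cong[OF refl])
      fix u assume u: "u \<in> C"
      have "(\<Sum>v\<in>V. W u v * (f u - f v)^2) = (\<Sum>v\<in>C. W u v * (f u - f v)^2) + (\<Sum>v\<in>V - C. W u v * (f u - f v)^2)"
        by (rule split_sum[OF fin C])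
      also have "(\<Sum>v\<in>C. W u v * (f u - f v)^2) = 0"
      proof (rule sum.neutral, rule ballI)
        fix v assume "v \<in> C"
        then show "W u v * (f u - f v)^2 = 0" using u C f[of u] f[of v] by (auto simp: subset_iff)
      qed
      also have "(\<Sum>v\<in>V - C. W u v * (f u - f v)^2) = (\<Sum>v\<in>V - C. \<delta>^2 * W u v)"
        by (rule sum.cong[OF refl]) (use u C f in auto)
      finally show "(\<Sum>v\<in>V. W u v * (f u - f v)^2) = (\<Sum>v\<in>V - C. \<delta>^2 * W u v)" by simp
    qed
    then show ?thesis unfolding cut_weight_def by (simp add: sum_distrib_left)
  qed
  have CD: "(\<Sum>u\<in>V - C. \<Sum>v\<in>V. W u v * (f u - f v)^2) = \<delta>^2 * cut_weight V W C"
  proof -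
    have "(\<Sum>u\<in>V - C. \<Sum>v\<in>V. W u v * (f u - f v)^2) = (\<Sum>u\<in>V - C. \<Sum>v\<in>C. \<delta>^2 * W u v)"
    proof (rule sum.cong[OF refl])
      fix u assume u: "u \<in> V - C"
      have "(\<Sum>v\<in>V. W u v * (f u - f v)^2) = (\<Sum>v\<in>C. W u v * (f u - f v)^2) + (\<Sum>v\<in>V - C. W u v * (f u - f v)^2)"
        by (rule split_sum[OF fin C])
      also have "(\<Sum>v\<in>V - C. W u v * (f u - f v)^2) = 0"
        by (rule sum.neutral) (use u C f in auto)
      also have "(\<Sum>v\<in>C. W u v * (f u - f v)^2) = (\<Sum>v\<in>C. \<delta>^2 * W u v)"
        by (rule sum.cong[OF refl]) (use u C f in auto)
      finally show "(\<Sum>v\<in>V. W u v * (f u - f v)^2) = (\<Sum>v\<in>C. \<delta>^2 * W u v)" by simp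
    qed
    also have "\<dots> = (\<Sum>v\<in>C. \<Sum>u\<in>V - C. \<delta>^2 * W u v)" by (rule sum.swap)
    also have "\<dots> = (\<Sum>v\<in>C. \<Sum>u\<in>V - C. \<delta>^2 * W v u)"
      by (intro sum.cong refl) (use C sym in auto)
    finally show ?thesis unfolding cut_weight_def by (simp add: sum_distrib_left)
  qed
  show ?thesis using split_sum[OF fin C, of "\<lambda>u. \<Sum>v\<in>V. W u v * (f u - f v)^2"] CC CD by simp
qed

lemma norm_indicator:
  fixes \<beta> :: "'v \<Rightarrow> real"
  assumes fin: "finite V" and C: "C \<subseteq> V"
    and f: "\<And>v. v \<in> V \<Longrightarrow> \<beta> v = \<mu> + \<delta> * (if v \<in> C then 1 else 0)"
    and n: "card V > 0"
  shows "(\<Sum>v\<in>V. (\<beta> v - mean V \<beta>)^2) = \<delta>^2 * real (card C) * real (card (V - C)) / real (card V)"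
proof -
  have finC: "finite C" using fin C by (rule rev_finite_subset)
  define c where "c = real (card C)"
  define d where "d = real (card (V - C))"
  define n where "n = real (card V)"
  have nd: "n = c + d" unfolding n_def c_def d_def using card_Diff_subset[OF finC C] card_mono[OF fin C]
    by (simp add: of_nat_diff)
  have n0: "n > 0" using n unfolding n_def by simp
  have "(\<Sum>v\<in>V. \<beta> v) = (\<Sum>v\<in>C. \<beta> v) + (\<Sum>v\<in>V - C. \<beta> v)" by (rule split_sum[OF fin C])
  also have "(\<Sum>v\<in>C. \<beta> v) = c * (\<mu> + \<delta>)" unfolding c_def using C f by (simp add: subset_iff)
  also have "(\<Sum>v\<in>V - C. \<beta> v) = d * \<mu>" unfolding d_def using C f by simp
  finally have m: "mean V \<beta> = (c * (\<mu> + \<delta>) + d * \<mu>) / n" unfolding mean_def n_def by simp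
  have "(\<Sum>v\<in>V. (\<beta> v - mean V \<beta>)^2) = (\<Sum>v\<in>C. (\<beta> v - mean V \<beta>)^2) + (\<Sum>v\<in>V - C. (\<beta> v - mean V \<beta>)^2)"
    by (rule split_sum[OF fin C])
  also have "(\<Sum>v\<in>C. (\<beta> v - mean V \<beta>)^2) = c * (\<mu> + \<delta> - mean V \<beta>)^2"
    unfolding c_def using C f by (simp add: subset_iff)
  also have "(\<Sum>v\<in>V - C. (\<beta> v - mean V \<beta>)^2) = d * (\<mu> - mean V \<beta>)^2"
    unfolding d_def using C f by simp
  also have "c * (\<mu> + \<delta> - mean V \<beta>)^2 + d * (\<mu> - mean V \<beta>)^2 = \<delta>^2 * c * d / n"
  proof -
    have e1: "\<mu> + \<delta> - mean V \<beta> = \<delta> * d / n" unfolding m using n0 nd by (simp add: field_simps)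
    have e2: "\<mu> - mean V \<beta> = - (\<delta> * c / n)" unfolding m using n0 nd by (simp add: field_simps)
    have "c * (\<delta> * d / n)^2 + d * (- (\<delta> * c / n))^2 = \<delta>^2 * c * d * (c + d) / n^2"
      by (simp add: power2_eq_square field_simps add_divide_distrib)
    also have "\<dots> = \<delta>^2 * c * d / n" using n0 nd by (simp add: power2_eq_square)
    finally show ?thesis unfolding e1 e2 .
  qed
  finally show ?thesis unfolding c_def d_def n_def .
qed



lemma scan_bdd:
  fixes W :: "'v \<Rightarrow> 'v \<Rightarrow> real"
  shows "bdd_above {(\<Sum>v\<in>V. x v * (y v - mean V y))\<^sup>2 | x.
            quad_form V (laplacian V W) x \<le> \<rho> \<and> vnorm V x \<le> 1 \<and> (\<Sum>v\<in>V. x v) = 0}"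
proof (rule bdd_aboveI, clarify)
  fix x :: "'v \<Rightarrow> real" assume v: "vnorm V x \<le> 1"
  have "(\<Sum>v\<in>V. (x v)^2) \<le> 1"
  proof -
    have "sqrt (\<Sum>v\<in>V. (x v)^2) \<le> 1" using v unfolding vnorm_def .
    then show ?thesis by simp
  qed
  have "(\<Sum>v\<in>V. x v * (y v - mean V y))\<^sup>2 \<le> (\<Sum>v\<in>V. (x v)^2) * (\<Sum>v\<in>V. (y v - mean V y)^2)"
    by (rule Cauchy_Schwarz_ineq_sum)
  also have "\<dots> \<le> 1 * (\<Sum>v\<in>V. (y v - mean V y)^2)"
    by (rule mult_right_mono) (use \<open>(\<Sum>v\<in>V. (x v)^2) \<le> 1\<close> in \<open>auto intro: sum_nonneg\<close>)
  finally show "(\<Sum>v\<in>V. x v * (y v - mean V y))\<^sup>2 \<le> (\<Sum>v\<in>V. (y v - mean V y)^2)" by simp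
qed

lemma scan_H1:
  fixes W :: "'v \<Rightarrow> 'v \<Rightarrow> real"
  assumes fin: "finite V" and n: "card V > 0" and sym: "\<And>u v. u \<in> V \<Longrightarrow> v \<in> V \<Longrightarrow> W u v = W v u"
    and beta: "\<beta> \<in> Theta1 V W \<rho> \<eta>" and eta: "\<eta> > 0"
  obtains x where "(\<Sum>v\<in>V. (x v)^2) = 1"
    and "\<And>e. (vnorm V (\<lambda>v. \<beta> v - mean V \<beta>) + (\<Sum>v\<in>V. x v * e v))^2 \<le> spectral_scan V W \<rho> (\<lambda>v. \<beta> v + e v)"
    and "vnorm V (\<lambda>v. \<beta> v - mean V \<beta>) \<ge> \<eta>"
proof -
  obtain \<mu> \<delta> C where d0: "\<delta> \<noteq> 0" and C: "C \<in> cut_class V W \<rho>"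
    and bv: "\<forall>v\<in>V. \<beta> v = \<mu> + \<delta> * (if v \<in> C then 1 else 0)"
    and Neta: "vnorm V (\<lambda>v. \<beta> v - mean V \<beta>) \<ge> \<eta>"
    using beta unfolding Theta1_def by blast
  define N where "N = vnorm V (\<lambda>v. \<beta> v - mean V \<beta>)"
  define m where "m = mean V \<beta>"
  define d where "d v = \<beta> v - m" for v
  define x where "x v = d v / N" for v
  have N0: "N > 0" using Neta eta unfolding N_def by simp
  have N2: "N^2 = (\<Sum>v\<in>V. (d v)^2)" unfolding N_def vnorm_def d_def m_def
    by (simp add: sum_nonneg)
  have CV: "C \<subseteq> V" "C \<noteq> {}" "C \<noteq> V"
    and cutC: "cut_weight V W C / (real (card C) * real (card (V - C))) \<le> \<rho> / real (card V)"
    using C unfolding cut_class_def by auto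
  have x2: "(\<Sum>v\<in>V. (x v)^2) = 1"
  proof -
    have "(\<Sum>v\<in>V. (x v)^2) = (\<Sum>v\<in>V. (d v)^2) / N^2"
      unfolding x_def by (simp add: power_divide sum_divide_distrib)
    then show ?thesis using N2[symmetric] N0 by simp
  qed
  have d_sum: "(\<Sum>v\<in>V. d v) = 0"
    unfolding d_def m_def mean_def using n by (simp add: sum_subtractf)
  have x_sum: "(\<Sum>v\<in>V. x v) = 0" unfolding x_def using d_sum by (simp add: sum_divide_distrib[symmetric])
  have x_norm: "vnorm V x = 1" unfolding vnorm_def using x2 by simp
  have quad: "quad_form V (laplacian V W) x \<le> \<rho>"
  proof -
    have "quad_form V (laplacian V W) x = (\<Sum>u\<in>V. \<Sum>v\<in>V. W u v * (x u - x v)^2) / 2"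
      by (rule quad_lap[OF fin sym])
    also have "(\<Sum>u\<in>V. \<Sum>v\<in>V. W u v * (x u - x v)^2) = (\<Sum>u\<in>V. \<Sum>v\<in>V. W u v * (\<beta> u - \<beta> v)^2) / N^2"
      unfolding x_def d_def by (simp add: sum_divide_distrib diff_divide_distrib[symmetric] power_divide)
    also have "(\<Sum>u\<in>V. \<Sum>v\<in>V. W u v * (\<beta> u - \<beta> v)^2) = 2 * \<delta>^2 * cut_weight V W C"
      by (rule cut_quad[OF fin CV(1) sym]) (use bv in auto)
    also have "N^2 = \<delta>^2 * real (card C) * real (card (V - C)) / real (card V)"
      unfolding N2 d_def m_def by (rule norm_indicator[OF fin CV(1) _ n]) (use bv in auto)
    finally have "quad_form V (laplacian V W) x =
        cut_weight V W C / (real (card C) * real (card (V - C))) * real (card V)"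
      using d0 n by (simp add: field_simps)
    also have "\<dots> \<le> \<rho> / real (card V) * real (card V)"
      by (rule mult_right_mono[OF cutC]) simp
    also have "\<dots> = \<rho>" using n by simp
    finally show ?thesis .
  qed
  have xb: "(\<Sum>v\<in>V. x v * \<beta> v) = N"
  proof -
    have "(\<Sum>v\<in>V. x v * \<beta> v) = (\<Sum>v\<in>V. x v * d v) + m * (\<Sum>v\<in>V. x v)"
    proof -
      have "(\<Sum>v\<in>V. x v * \<beta> v) = (\<Sum>v\<in>V. x v * d v + m * x v)"
        by (rule sum.cong[OF refl]) (simp add: d_def algebra_simps)
      then show ?thesis by (simp add: sum.distrib sum_distrib_left)
    qed
    also have "(\<Sum>v\<in>V. x v * d v) = (\<Sum>v\<in>V. (d v)^2) / N"
      unfolding x_def by (simp add: power2_eq_square sum_divide_distrib)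
    finally show ?thesis using x_sum N2[symmetric] N0 by (simp add: power2_eq_square)
  qed
  have main: "(N + (\<Sum>v\<in>V. x v * e v))^2 \<le> spectral_scan V W \<rho> (\<lambda>v. \<beta> v + e v)" for e
  proof -
    define y where "y = (\<lambda>v. \<beta> v + e v)"
    have "(\<Sum>v\<in>V. x v * (y v - mean V y)) = (\<Sum>v\<in>V. x v * \<beta> v) + (\<Sum>v\<in>V. x v * e v) - mean V y * (\<Sum>v\<in>V. x v)"
      unfolding y_def by (simp add: algebra_simps sum.distrib sum_distrib_left sum_distrib_right sum_subtractf)
    then have eq: "(\<Sum>v\<in>V. x v * (y v - mean V y)) = N + (\<Sum>v\<in>V. x v * e v)" using xb x_sum by simp
    have "(\<Sum>v\<in>V. x v * (y v - mean V y))\<^sup>2 \<le> spectral_scan V W \<rho> y"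
      unfolding spectral_scan_def
      by (rule cSup_upper[OF _ scan_bdd]) (use quad x_norm x_sum in auto)
    then show ?thesis using eq unfolding y_def by simp
  qed
  show ?thesis by (rule that[OF x2 main[unfolded N_def] Neta])
qed



lemma noise_prob: "\<sigma> > 0 \<Longrightarrow> prob_space (noise V \<sigma>)"
  unfolding noise_def by (intro prob_space_PiM prob_space_normal_density)

lemma rho_pl:
  assumes p: "p > 0" and k: "1 \<le> k"
  shows "c * real p powr (2 * real k - real l - 1) * real p ^ l = c * real p ^ (2 * k - 1)"
proof -
  have "real p powr (2 * real k - real l - 1) * real p ^ l = real p powr (2 * real k - real l - 1) * real p powr real l"
    using p by (simp add: powr_realpow)
  also have "\<dots> = real p powr (2 * real k - 1)" using p by (simp add: powr_add[symmetric])
  also have "2 * real k - 1 = real (2 * k - 1)" using k by (simp add: of_nat_diff)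
  also have "real p powr real (2 * k - 1) = real p ^ (2 * k - 1)" using p by (simp add: powr_realpow)
  finally show ?thesis by (simp add: mult.assoc)
qed

lemma per_m_H0:
  assumes p: "p \<ge> 2" and g: "simple_graph_on p E" and conn: "connected_on p E"
    and k: "1 \<le> k" and c: "c > 0" and s: "\<sigma> > 0" and eta: "\<eta> > 0" and beta: "\<beta> \<in> Theta0 (tuples p l)"
  shows "prob_obs (tuples p l) \<sigma> \<beta> (\<lambda>y. spectral_scan (tuples p l) (multiscale_graph p l E)
      (c * real p powr (2 * real k - real l - 1)) y > \<eta>^2 / 4)
    \<le> 8 * c * (real l)^2 * real p ^ (2 * k + 4) * \<sigma>^2 / \<eta>^2"
proof -
  define V where "V = tuples p l"
  define N where "N = noise V \<sigma>"
  define \<rho> where "\<rho> = c * real p powr (2 * real k - real l - 1)"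
  define A where "A e = (\<Sum>t<l. \<Sum>q\<in>tuples p (Suc t). (blk p l e (Suc t) q)^2)" for e
  define K where "K = real l * real p ^ 5 * (2 * \<rho>)"
  define \<tau> where "\<tau> = \<eta>^2 / 4"
  have p0: "p > 0" using p by simp
  have rho0: "\<rho> \<ge> 0" unfolding \<rho>_def using c by simp
  have tau0: "\<tau> > 0" unfolding \<tau>_def using eta by simp
  interpret N: prob_space N unfolding N_def by (rule noise_prob[OF s])
  obtain \<mu> where mu: "\<forall>v\<in>V. \<beta> v = \<mu>" using beta unfolding Theta0_def V_def by blast
  have Aint: "integrable N A" unfolding N_def V_def A_def by (rule A_moment(1)[OF s])
  have AE: "(\<integral>e. A e \<partial>N) = real l * \<sigma>^2 * real p ^ l" unfolding N_def V_def A_def by (rule A_moment(2)[OF s])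
  have Bint: "integrable N (\<lambda>e. K * A e)" using Aint by simp
  have [measurable]: "(\<lambda>e. K * A e) \<in> borel_measurable N" using Bint by (rule borel_measurable_integrable)
  have Bsets: "{e \<in> space N. \<tau> \<le> K * A e} \<in> sets N" by measurable
  have le: "spectral_scan V (multiscale_graph p l E) \<rho> (\<lambda>v. \<beta> v + e v) \<le> K * A e" for e
    unfolding K_def A_def V_def by (rule scan_H0[OF p0 conn g rho0 mu[unfolded V_def]])
  have "prob_obs V \<sigma> \<beta> (\<lambda>y. spectral_scan V (multiscale_graph p l E) \<rho> y > \<tau>) =
      measure N {e \<in> space N. spectral_scan V (multiscale_graph p l E) \<rho> (\<lambda>v. \<beta> v + e v) > \<tau>}"
    unfolding prob_obs_def N_def ..
  also have "\<dots> \<le> measure N {e \<in> space N. \<tau> \<le> K * A e}"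
    by (rule N.finite_measure_mono[OF _ Bsets]) (use le in \<open>auto intro: less_imp_le order.strict_trans2\<close>)
  also have "\<dots> \<le> (\<integral>e. K * A e \<partial>N) / \<tau>"
    by (rule integral_Markov_inequality_measure[OF Bint _ _ tau0, of "space N"])
       (auto simp: K_def A_def rho0 intro!: mult_nonneg_nonneg sum_nonneg)
  also have "(\<integral>e. K * A e \<partial>N) = K * (real l * \<sigma>^2 * real p ^ l)" using AE by simp
  also have "K * (real l * \<sigma>^2 * real p ^ l) = 2 * real l * real l * \<sigma>^2 * real p ^ 5 * (\<rho> * real p ^ l)"
    unfolding K_def by (simp add: algebra_simps)
  also have "\<rho> * real p ^ l = c * real p ^ (2 * k - 1)" unfolding \<rho>_def by (rule rho_pl[OF p0 k])
  also have "2 * real l * real l * \<sigma>^2 * real p ^ 5 * (c * real p ^ (2 * k - 1)) / \<tau> =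
      8 * c * (real l)^2 * real p ^ (2 * k + 4) * \<sigma>^2 / \<eta>^2"
  proof -
    have "real p ^ 5 * real p ^ (2 * k - 1) = real p ^ (2 * k + 4)"
      using k by (simp add: power_add[symmetric] add.commute)
    then show ?thesis unfolding \<tau>_def using eta by (simp add: field_simps power2_eq_square)
  qed
  finally show ?thesis unfolding V_def \<rho>_def \<tau>_def .
qed

lemma per_m_H1:
  assumes p: "p \<ge> 2" and g: "simple_graph_on p E"
    and s: "\<sigma> > 0" and eta: "\<eta> > 0" and beta: "\<beta> \<in> Theta1 (tuples p l) (multiscale_graph p l E) \<rho> \<eta>"
  shows "prob_obs (tuples p l) \<sigma> \<beta> (\<lambda>y. \<not> spectral_scan (tuples p l) (multiscale_graph p l E) \<rho> y > \<eta>^2 / 4)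
    \<le> 4 * \<sigma>^2 / \<eta>^2"
proof -
  define V where "V = tuples p l"
  define W where "W = multiscale_graph p l E"
  define N where "N = noise V \<sigma>"
  define \<tau> where "\<tau> = \<eta>^2 / 4"
  have tau0: "\<tau> > 0" unfolding \<tau>_def using eta by simp
  interpret N: prob_space N unfolding N_def by (rule noise_prob[OF s])
  have fin: "finite V" unfolding V_def by simp
  have n: "card V > 0" unfolding V_def using p by simp
  have sym: "\<And>u v. u \<in> V \<Longrightarrow> v \<in> V \<Longrightarrow> W u v = W v u"
    unfolding V_def W_def using msg_sym[OF g] by blast
  obtain x where x2: "(\<Sum>v\<in>V. (x v)^2) = 1"
    and main: "\<And>e. (vnorm V (\<lambda>v. \<beta> v - mean V \<beta>) + (\<Sum>v\<in>V. x v * e v))^2 \<le> spectral_scan V W \<rho> (\<lambda>v. \<beta> v + e v)"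
    and Neta: "vnorm V (\<lambda>v. \<beta> v - mean V \<beta>) \<ge> \<eta>"
    using scan_H1[OF fin n sym beta[folded V_def W_def] eta] by blast
  define Z where "Z e = (\<Sum>v\<in>V. x v * e v)" for e
  have Zint: "integrable N (\<lambda>e. (Z e)^2)" unfolding N_def Z_def by (rule noise_moment(1)[OF s fin])
  have ZE: "(\<integral>e. (Z e)^2 \<partial>N) = \<sigma>^2" unfolding N_def Z_def using noise_moment(2)[OF s fin, of x] x2 by simp
  have [measurable]: "(\<lambda>e. (Z e)^2) \<in> borel_measurable N" using Zint by (rule borel_measurable_integrable)
  have Zsets: "{e \<in> space N. \<tau> \<le> (Z e)^2} \<in> sets N" by measurable
  have imp: "\<tau> \<le> (Z e)^2" if "\<not> spectral_scan V W \<rho> (\<lambda>v. \<beta> v + e v) > \<tau>" for e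
  proof -
    define M where "M = vnorm V (\<lambda>v. \<beta> v - mean V \<beta>)"
    have "(M + Z e)^2 \<le> (\<eta>/2)^2" using main[of e] that unfolding M_def Z_def \<tau>_def by (simp add: power_divide)
    then have "\<bar>M + Z e\<bar> \<le> \<eta>/2" using eta by (simp add: abs_le_square_iff[symmetric])
    then have "Z e \<le> - (\<eta>/2)" using Neta unfolding M_def by linarith
    then have "(\<eta>/2)^2 \<le> (Z e)^2" using eta by (simp add: abs_le_square_iff[symmetric])
    then show ?thesis unfolding \<tau>_def by (simp add: power_divide)
  qed
  have "prob_obs V \<sigma> \<beta> (\<lambda>y. \<not> spectral_scan V W \<rho> y > \<tau>) =
      measure N {e \<in> space N. \<not> spectral_scan V W \<rho> (\<lambda>v. \<beta> v + e v) > \<tau>}"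
    unfolding prob_obs_def N_def ..
  also have "\<dots> \<le> measure N {e \<in> space N. \<tau> \<le> (Z e)^2}"
    by (rule N.finite_measure_mono[OF _ Zsets]) (use imp in auto)
  also have "\<dots> \<le> (\<integral>e. (Z e)^2 \<partial>N) / \<tau>"
    by (rule integral_Markov_inequality_measure[OF Zint _ _ tau0, of "space N"]) auto
  also have "\<dots> = 4 * \<sigma>^2 / \<eta>^2" unfolding ZE \<tau>_def by simp
  finally show ?thesis unfolding V_def W_def \<tau>_def .
qed



theorem corollary4:
  fixes p l k :: "nat \<Rightarrow> nat"
    and E :: "nat \<Rightarrow> nat \<Rightarrow> nat \<Rightarrow> bool"
    and \<sigma> \<eta> :: "nat \<Rightarrow> real"
    and c :: real
  defines "n \<equiv> (\<lambda>m. p m ^ l m)"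
    and "V \<equiv> (\<lambda>m. tuples (p m) (l m))"
    and "G \<equiv> (\<lambda>m. multiscale_graph (p m) (l m) (E m))"
    and "\<rho> \<equiv> (\<lambda>m. c * real (p m) powr (2 * real (k m) - real (l m) - 1))"
  assumes p2: "\<And>m. p m \<ge> 2"
    and l1: "\<And>m. l m \<ge> 1"
    and graph: "\<And>m. simple_graph_on (p m) (E m)"
    and conn: "\<And>m. connected_on (p m) (E m)"
    and k_range: "\<And>m. 1 \<le> k m \<and> k m \<le> l m"
    and c_pos: "c > 0"
    and \<sigma>_pos: "\<And>m. \<sigma> m > 0"
    and \<eta>_pos: "\<And>m. \<eta> m > 0"
    and n_lim: "filterlim n at_top sequentially"
    and snr: "(\<lambda>m. (real (p m))\<^sup>2 * (real (l m) + 2) * real (n m) powr ((2 * real (k m) + 1) / real (l m))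
                   / (\<eta> m / \<sigma> m)) \<longlonglongrightarrow> 0"
  shows "\<exists>\<tau> :: nat \<Rightarrow> real.
     (\<forall>e>0. eventually (\<lambda>m. \<forall>\<beta>\<in>Theta0 (V m).
         prob_obs (V m) (\<sigma> m) \<beta> (\<lambda>y. spectral_scan (V m) (G m) (\<rho> m) y > \<tau> m) \<le> e) sequentially) \<and>
     (\<forall>e>0. eventually (\<lambda>m. \<forall>\<beta>\<in>Theta1 (V m) (G m) (\<rho> m) (\<eta> m).
         prob_obs (V m) (\<sigma> m) \<beta> (\<lambda>y. \<not> spectral_scan (V m) (G m) (\<rho> m) y > \<tau> m) \<le> e) sequentially)"
proof -
  define f where "f m = (real (p m))\<^sup>2 * (real (l m) + 2) * real (n m) powr ((2 * real (k m) + 1) / real (l m))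
                   / (\<eta> m / \<sigma> m)" for m
  have f_eq: "f m = real (p m) ^ (2 * k m + 3) * (real (l m) + 2) * \<sigma> m / \<eta> m" for m
  proof -
    have pp: "real (p m) > 0" using p2[of m] by simp
    have l0: "real (l m) > 0" using l1[of m] by simp
    have "real (n m) powr ((2 * real (k m) + 1) / real (l m)) = (real (p m) powr real (l m)) powr ((2 * real (k m) + 1) / real (l m))"
      unfolding n_def using pp by (simp add: powr_realpow)
    also have "\<dots> = real (p m) powr (2 * real (k m) + 1)" using l0 by (simp add: powr_powr)
    also have "\<dots> = real (p m) ^ (2 * k m + 1)"
      using pp powr_realpow[OF pp, of "2 * k m + 1"] by (simp add: add.commute)
    finally have "real (n m) powr ((2 * real (k m) + 1) / real (l m)) = real (p m) ^ (2 * k m + 1)" .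
    moreover have "(real (p m))\<^sup>2 * real (p m) ^ (2 * k m + 1) = real (p m) ^ (2 * k m + 3)"
    proof -
      have "(real (p m))\<^sup>2 * real (p m) ^ (2 * k m + 1) = real (p m) ^ (2 + (2 * k m + 1))"
        by (simp only: power_add)
      also have "2 + (2 * k m + 1) = 2 * k m + 3" by simp
      finally show ?thesis .
    qed
    ultimately show ?thesis unfolding f_def using \<sigma>_pos[of m] \<eta>_pos[of m]
      by (simp add: field_simps)
  qed
  have flim: "f \<longlonglongrightarrow> 0" using snr unfolding f_def .
  have f0: "0 \<le> f m" for m unfolding f_eq using \<sigma>_pos[of m] \<eta>_pos[of m] by simp
  have small: "eventually (\<lambda>m. (f m)^2 \<le> e') sequentially" if e': "e' > 0" for e'
  proof -
    have "eventually (\<lambda>m. f m < sqrt e') sequentially"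
      using order_tendstoD(2)[OF flim] e' by simp
    then show ?thesis
    proof (rule eventually_mono)
      fix m assume "f m < sqrt e'"
      then have "(f m)^2 \<le> (sqrt e')^2" using f0[of m] by (intro power_mono) auto
      then show "(f m)^2 \<le> e'" using e' by simp
    qed
  qed
  have f2: "(f m)^2 = real (p m) ^ (4 * k m + 6) * (real (l m) + 2)^2 * (\<sigma> m)^2 / (\<eta> m)^2" for m
  proof -
    have "(real (p m) ^ (2 * k m + 3))^2 = real (p m) ^ ((2 * k m + 3) * 2)" by (simp only: power_mult)
    also have "(2 * k m + 3) * 2 = 4 * k m + 6" by simp
    finally have P: "(real (p m) ^ (2 * k m + 3))^2 = real (p m) ^ (4 * k m + 6)" .
    show ?thesis unfolding f_eq power_divide power_mult_distrib P ..
  qed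
  have B0: "8 * c * (real (l m))^2 * real (p m) ^ (2 * k m + 4) * (\<sigma> m)^2 / (\<eta> m)^2 \<le> 8 * c * (f m)^2" for m
  proof -
    have a: "(real (l m))^2 \<le> (real (l m) + 2)^2" by (intro power_mono) auto
    have b: "real (p m) ^ (2 * k m + 4) \<le> real (p m) ^ (4 * k m + 6)"
      using p2[of m] by (intro power_increasing) auto
    have "(real (l m))^2 * real (p m) ^ (2 * k m + 4) \<le> (real (l m) + 2)^2 * real (p m) ^ (4 * k m + 6)"
      by (intro mult_mono a b) auto
    then have "(real (l m))^2 * real (p m) ^ (2 * k m + 4) * ((\<sigma> m)^2 / (\<eta> m)^2) \<le>
        (real (l m) + 2)^2 * real (p m) ^ (4 * k m + 6) * ((\<sigma> m)^2 / (\<eta> m)^2)"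
      by (rule mult_right_mono) simp
    then have "8 * c * ((real (l m))^2 * real (p m) ^ (2 * k m + 4) * ((\<sigma> m)^2 / (\<eta> m)^2)) \<le>
        8 * c * ((real (l m) + 2)^2 * real (p m) ^ (4 * k m + 6) * ((\<sigma> m)^2 / (\<eta> m)^2))"
      by (rule mult_left_mono) (use c_pos in simp)
    moreover have "8 * c * ((real (l m))^2 * real (p m) ^ (2 * k m + 4) * ((\<sigma> m)^2 / (\<eta> m)^2)) =
        8 * c * (real (l m))^2 * real (p m) ^ (2 * k m + 4) * (\<sigma> m)^2 / (\<eta> m)^2" by (simp add: field_simps)
    moreover have "8 * c * ((real (l m) + 2)^2 * real (p m) ^ (4 * k m + 6) * ((\<sigma> m)^2 / (\<eta> m)^2)) = 8 * c * (f m)^2"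
      unfolding f2 by (simp add: field_simps)
    ultimately show ?thesis by simp
  qed
  have B1: "4 * (\<sigma> m)^2 / (\<eta> m)^2 \<le> 4 * (f m)^2" for m
  proof -
    have "1 \<le> real (p m) ^ (4 * k m + 6) * (real (l m) + 2)^2"
    proof -
      have "1 \<le> real (p m) ^ (4 * k m + 6)" using p2[of m] by (intro one_le_power) auto
      moreover have "1 \<le> (real (l m) + 2)^2" by (rule one_le_power) simp
      ultimately show ?thesis using mult_mono[of 1 _ 1] by fastforce
    qed
    then have "1 * ((\<sigma> m)^2 / (\<eta> m)^2) \<le> real (p m) ^ (4 * k m + 6) * (real (l m) + 2)^2 * ((\<sigma> m)^2 / (\<eta> m)^2)"
      by (rule mult_right_mono) simp
    then show ?thesis unfolding f2 by simp
  qed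
  show ?thesis
  proof (intro exI[of _ "\<lambda>m. (\<eta> m)^2 / 4"] conjI allI impI)
    fix e :: real assume e: "e > 0"
    have ce: "e / (8 * c) > 0" using e c_pos by simp
    show "eventually (\<lambda>m. \<forall>\<beta>\<in>Theta0 (V m).
         prob_obs (V m) (\<sigma> m) \<beta> (\<lambda>y. spectral_scan (V m) (G m) (\<rho> m) y > (\<eta> m)^2 / 4) \<le> e) sequentially"
      using small[OF ce]
    proof (rule eventually_mono)
      fix m assume fm: "(f m)^2 \<le> e / (8 * c)"
      show "\<forall>\<beta>\<in>Theta0 (V m). prob_obs (V m) (\<sigma> m) \<beta> (\<lambda>y. spectral_scan (V m) (G m) (\<rho> m) y > (\<eta> m)^2 / 4) \<le> e"
      proof
        fix \<beta> assume \<beta>: "\<beta> \<in> Theta0 (V m)"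
        have "prob_obs (V m) (\<sigma> m) \<beta> (\<lambda>y. spectral_scan (V m) (G m) (\<rho> m) y > (\<eta> m)^2 / 4)
            \<le> 8 * c * (real (l m))^2 * real (p m) ^ (2 * k m + 4) * (\<sigma> m)^2 / (\<eta> m)^2"
          unfolding V_def G_def \<rho>_def
          by (rule per_m_H0[OF p2 graph conn _ c_pos \<sigma>_pos \<eta>_pos]) (use k_range \<beta> V_def in auto)
        also have "\<dots> \<le> 8 * c * (f m)^2" by (rule B0)
        also have "\<dots> \<le> 8 * c * (e / (8 * c))" using fm c_pos by (intro mult_left_mono) auto
        also have "\<dots> = e" using c_pos by simp
        finally show "prob_obs (V m) (\<sigma> m) \<beta> (\<lambda>y. spectral_scan (V m) (G m) (\<rho> m) y > (\<eta> m)^2 / 4) \<le> e" .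
      qed
    qed
  next
    fix e :: real assume e: "e > 0"
    have ce: "e / 4 > 0" using e by simp
    show "eventually (\<lambda>m. \<forall>\<beta>\<in>Theta1 (V m) (G m) (\<rho> m) (\<eta> m).
         prob_obs (V m) (\<sigma> m) \<beta> (\<lambda>y. \<not> spectral_scan (V m) (G m) (\<rho> m) y > (\<eta> m)^2 / 4) \<le> e) sequentially"
      using small[OF ce]
    proof (rule eventually_mono)
      fix m assume fm: "(f m)^2 \<le> e / 4"
      show "\<forall>\<beta>\<in>Theta1 (V m) (G m) (\<rho> m) (\<eta> m).
         prob_obs (V m) (\<sigma> m) \<beta> (\<lambda>y. \<not> spectral_scan (V m) (G m) (\<rho> m) y > (\<eta> m)^2 / 4) \<le> e"
      proof
        fix \<beta> assume \<beta>: "\<beta> \<in> Theta1 (V m) (G m) (\<rho> m) (\<eta> m)"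
        have "prob_obs (V m) (\<sigma> m) \<beta> (\<lambda>y. \<not> spectral_scan (V m) (G m) (\<rho> m) y > (\<eta> m)^2 / 4)
            \<le> 4 * (\<sigma> m)^2 / (\<eta> m)^2"
          unfolding V_def G_def
          by (rule per_m_H1[OF p2 graph \<sigma>_pos \<eta>_pos]) (use \<beta> V_def G_def in simp)
        also have "\<dots> \<le> 4 * (f m)^2" by (rule B1)
        also have "\<dots> \<le> e" using fm by simp
        finally show "prob_obs (V m) (\<sigma> m) \<beta> (\<lambda>y. \<not> spectral_scan (V m) (G m) (\<rho> m) y > (\<eta> m)^2 / 4) \<le> e" .
      qed
    qed
  qed
qed


end
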